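(* Let $\beta\in\ell^2\cap[0,1]^{\mathbb{N}}$ and $P\in\mathcal{P}$. If $\nu:\mathcal{P}\to\mathcal{H}$ is pathwise differentiable at $P$, then $\nu^\beta:=\Gamma_\beta\circ\nu$ is pathwise differentiable at $P$ with local parameter $\dot{\nu}_P^\beta=\Gamma_\beta\circ\dot{\nu}_P$ and efficient influence function $\phi_P^\beta\in L^2(P;\mathcal{H})$.
   Context: Let $(\mathcal{Z},\mathbf{B})$ be a Polish space, $\mathcal{P}$ a model of distributions dominated by a $\sigma$-finite measure $\lambda$, $\mathcal{H}$ a real separable Hilbert space with orthonormal basis $(h_k)_{k\ge1}$ (padded with zeros if finite-dimensional). For $P\in\mathcal{P}$, $s\in L^2(P)$, $\mathscr{P}(P,\mathcal{P},s)$ is the set of submodels $\{P_\epsilon:\epsilon\in[0,\delta)\}\subset\mathcal{P}$ with $\|p_\epsilon^{1/2}-p^{1/2}-\epsilon sp^{1/2}/2\|_{L^2(\lambda)}=o(\epsilon)$; tangent set $\{s:\mathscr{P}(P,\mathcal{P},s)\ne\emptyset\}$, tangent space $\dot{\mathcal{P}}_P$ its closed linear span. A map $\mu:\mathcal{P}\to\mathcal{H}$ is pathwise differentiable at $P$ with local parameter $\dot{\mu}_P$ if $\dot{\mu}_P:\dot{\mathcal{P}}_P\to\mathcal{H}$ is continuous linear and $\|\mu(P_\epsilon)-\mu(P)-\epsilon\dot{\mu}_P(s)\|_{\mathcal{H}}=o(\epsilon)$ for every tangent-set $s$ and every submodel in $\mathscr{P}(P,\mathcal{P},s)$; the adjoint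 $\dot{\mu}_P^*$ is the efficient influence operator, and $\phi:\mathcal{Z}\to\mathcal{H}$ is an efficient influence function of $\mu$ at $P$ if $\dot{\mu}_P^*(h)(z)=\langle h,\phi(z)\rangle_{\mathcal{H}}$ for all $h\in\mathcal{H}$ and all $z$ in a $P$-probability-one set. $\Gamma_\beta:\mathcal{H}\to\mathcal{H}$, $\Gamma_\beta(h)=\sum_k\beta_k\langle h,h_k\rangle_{\mathcal{H}}h_k$. $\phi_P^\beta(z)=\sum_k\beta_k\dot{\nu}_P^*(h_k)(z)h_k$. $L^2(P;\mathcal{H})$: Bochner measurable $f$ with $\int\|f\|_{\mathcal{H}}^2dP<\infty$. *)

theory Defs
  imports "HOL-Probability.Probability"
begin

definition dominated_model :: "'z measure \<Rightarrow> 'z measure set \<Rightarrow> bool" where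
  "dominated_model lam model \<longleftrightarrow>
     (\<forall>P\<in>model. prob_space P \<and> sets P = sets lam \<and> absolutely_continuous lam P)"

definition rdens :: "'z measure \<Rightarrow> 'z measure \<Rightarrow> 'z \<Rightarrow> real" where
  "rdens lam P z = sqrt (enn2real (RN_deriv lam P z))"

definition L2 :: "'z measure \<Rightarrow> ('z \<Rightarrow> real) set" where
  "L2 P = {f. f \<in> borel_measurable P \<and> integrable P (\<lambda>z. (f z)^2)}"

text \<open>L^2(P;H): Bochner (= Borel, H separable) measurable, square integrable norm.\<close>
definition L2H :: "'z measure \<Rightarrow> ('z \<Rightarrow> 'h::{real_normed_vector,second_countable_topology}) set" where
  "L2H P = {f. f \<in> borel_measurable P \<and> integrable P (\<lambda>z. (norm (f z))^2)}"

text \<open>Orthonormal basis of H padded with zeros (the zeros form a tail).\<close>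
definition onb_padded :: "(nat \<Rightarrow> 'h::real_inner) \<Rightarrow> bool" where
  "onb_padded hs \<longleftrightarrow>
     (\<forall>k. hs k = 0 \<or> norm (hs k) = 1) \<and>
     (\<forall>j k. j \<noteq> k \<longrightarrow> inner (hs j) (hs k) = 0) \<and>
     (\<forall>j k. j \<le> k \<longrightarrow> hs k \<noteq> 0 \<longrightarrow> hs j \<noteq> 0) \<and>
     closure (span (range hs)) = UNIV"

text \<open>Submodels through P with score s: families P_eps, eps in [0,delta), in the model with
  || p_eps^(1/2) - p^(1/2) - eps s p^(1/2)/2 ||_{L2(lam)} = o(eps) as eps -> 0+.\<close>
definition submodels :: "'z measure \<Rightarrow> 'z measure set \<Rightarrow> 'z measure \<Rightarrow> ('z \<Rightarrow> real)
    \<Rightarrow> (real \<Rightarrow> 'z measure) set" where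
  "submodels lam model P s = {Pe. \<exists>\<delta>>0. (\<forall>\<epsilon>\<in>{0..<\<delta>}. Pe \<epsilon> \<in> model) \<and>
     (\<forall>e>0. eventually (\<lambda>\<epsilon>.
        (\<integral>\<^sup>+ z. ennreal ((rdens lam (Pe \<epsilon>) z - rdens lam P z - \<epsilon> * s z * rdens lam P z / 2)^2) \<partial>lam)
          \<le> ennreal ((e * \<epsilon>)^2)) (at_right 0))}"

definition tangent_set :: "'z measure \<Rightarrow> 'z measure set \<Rightarrow> 'z measure \<Rightarrow> ('z \<Rightarrow> real) set" where
  "tangent_set lam model P = {s \<in> L2 P. submodels lam model P s \<noteq> {}}"

definition lin_span :: "('z \<Rightarrow> real) set \<Rightarrow> ('z \<Rightarrow> real) set" where
  "lin_span S = {t. \<exists>F c. finite F \<and> F \<subseteq> S \<and> t = (\<lambda>z. \<Sum>f\<in>F. c f * f z)}"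

definition tangent_space :: "'z measure \<Rightarrow> 'z measure set \<Rightarrow> 'z measure \<Rightarrow> ('z \<Rightarrow> real) set" where
  "tangent_space lam model P = {s \<in> L2 P. \<forall>e>0. \<exists>t\<in>lin_span (tangent_set lam model P).
      (\<integral>z. (s z - t z)^2 \<partial>P) < e}"

definition cont_linear_on :: "'z measure \<Rightarrow> ('z \<Rightarrow> real) set \<Rightarrow> (('z \<Rightarrow> real) \<Rightarrow> 'h::real_normed_vector) \<Rightarrow> bool" where
  "cont_linear_on P T D \<longleftrightarrow>
     (\<forall>s\<in>T. \<forall>t\<in>T. D (\<lambda>z. s z + t z) = D s + D t) \<and>
     (\<forall>a. \<forall>s\<in>T. D (\<lambda>z. a * s z) = a *\<^sub>R D s) \<and>
     (\<exists>C. \<forall>s\<in>T. norm (D s) \<le> C * sqrt (\<integral>z. (s z)^2 \<partial>P))"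

definition pathwise_diff :: "'z measure \<Rightarrow> 'z measure set \<Rightarrow> ('z measure \<Rightarrow> 'h::real_normed_vector)
    \<Rightarrow> 'z measure \<Rightarrow> (('z \<Rightarrow> real) \<Rightarrow> 'h) \<Rightarrow> bool" where
  "pathwise_diff lam model mu P D \<longleftrightarrow>
     cont_linear_on P (tangent_space lam model P) D \<and>
     (\<forall>s\<in>tangent_set lam model P. \<forall>Pe\<in>submodels lam model P s.
        \<forall>e>0. eventually (\<lambda>\<epsilon>. norm (mu (Pe \<epsilon>) - mu P - \<epsilon> *\<^sub>R D s) \<le> e * \<epsilon>) (at_right 0))"

text \<open>Efficient influence operator: the adjoint D^* : H \<rightarrow> tangent space, i.e. D^*(h) is
  an element of the tangent space with <D s, h>_H = <s, D^* h>_{L2(P)} for all s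
  in the tangent space (a representative chosen by Hilbert choice; unique up to P-null sets).\<close>
definition eff_infl_op :: "'z measure \<Rightarrow> 'z measure set \<Rightarrow> 'z measure \<Rightarrow> (('z \<Rightarrow> real) \<Rightarrow> 'h::real_inner)
    \<Rightarrow> 'h \<Rightarrow> 'z \<Rightarrow> real" where
  "eff_infl_op lam model P D h = (SOME f. f \<in> tangent_space lam model P \<and>
      (\<forall>s\<in>tangent_space lam model P. inner (D s) h = (\<integral>z. s z * f z \<partial>P)))"

definition is_eif :: "'z measure \<Rightarrow> 'z measure set \<Rightarrow> 'z measure \<Rightarrow> (('z \<Rightarrow> real) \<Rightarrow> 'h::real_inner)
    \<Rightarrow> ('z \<Rightarrow> 'h) \<Rightarrow> bool" where
  "is_eif lam model P D \<phi> \<longleftrightarrow>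
     (\<forall>h. AE z in P. eff_infl_op lam model P D h z = inner h (\<phi> z))"

definition Gamma_beta :: "(nat \<Rightarrow> real) \<Rightarrow> (nat \<Rightarrow> 'h::real_inner) \<Rightarrow> 'h \<Rightarrow> 'h" where
  "Gamma_beta beta hs x = (\<Sum>k. (beta k * inner x (hs k)) *\<^sub>R hs k)"

definition phi_beta :: "'z measure \<Rightarrow> 'z measure set \<Rightarrow> 'z measure \<Rightarrow> (('z \<Rightarrow> real) \<Rightarrow> 'h::real_inner)
    \<Rightarrow> (nat \<Rightarrow> real) \<Rightarrow> (nat \<Rightarrow> 'h) \<Rightarrow> 'z \<Rightarrow> 'h" where
  "phi_beta lam model P D beta hs z = (\<Sum>k. (beta k * eff_infl_op lam model P D (hs k) z) *\<^sub>R hs k)"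

end

theory Submission
  imports Defs
begin


lemma abs_mult_le_sq: "2 * \<bar>a * b\<bar> \<le> a^2 + (b::real)^2"
proof -
  have "0 \<le> (\<bar>a\<bar> - \<bar>b\<bar>)^2" by simp
  then show ?thesis by (simp add: power2_eq_square algebra_simps abs_mult)
qed

definition N2 :: "'a measure \<Rightarrow> ('a \<Rightarrow> real) \<Rightarrow> real" where
  "N2 M s = (\<integral>z. (s z)^2 \<partial>M)"

lemma L2_D: assumes "s \<in> L2 M" shows "s \<in> borel_measurable M" "integrable M (\<lambda>z. (s z)^2)"
  using assms by (auto simp: L2_def)

lemma L2_I: "s \<in> borel_measurable M \<Longrightarrow> integrable M (\<lambda>z. (s z)^2) \<Longrightarrow> s \<in> L2 M"
  by (auto simp: L2_def)

lemma L2_mult_int: assumes "s \<in> L2 M" "t \<in> L2 M" shows "integrable M (\<lambda>z. s z * t z)"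
proof (rule Bochner_Integration.integrable_bound[where f="\<lambda>z. (s z)^2 + (t z)^2"])
  show "integrable M (\<lambda>z. (s z)^2 + (t z)^2)" using assms by (auto simp: L2_def)
  show "(\<lambda>z. s z * t z) \<in> borel_measurable M" using assms by (auto simp: L2_def)
  show "AE x in M. norm (s x * t x) \<le> norm ((s x)\<^sup>2 + (t x)\<^sup>2)"
  proof (rule AE_I2)
    fix x
    have "\<bar>s x * t x\<bar> \<le> (s x)^2 + (t x)^2"
      using abs_mult_le_sq[of "s x" "t x"] by simp
    then show "norm (s x * t x) \<le> norm ((s x)\<^sup>2 + (t x)\<^sup>2)" by simp
  qed
qed

lemma L2_add: assumes "s \<in> L2 M" "t \<in> L2 M" shows "(\<lambda>z. s z + t z) \<in> L2 M"
proof (rule L2_I)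
  show "(\<lambda>z. s z + t z) \<in> borel_measurable M" using assms by (auto simp: L2_def)
  have "integrable M (\<lambda>z. (s z)^2 + 2 * (s z * t z) + (t z)^2)"
    using assms L2_mult_int[OF assms] by (auto simp: L2_def)
  then show "integrable M (\<lambda>z. (s z + t z)^2)" by (simp add: power2_sum algebra_simps)
qed

lemma L2_scale: assumes "s \<in> L2 M" shows "(\<lambda>z. a * s z) \<in> L2 M"
  using assms by (auto simp: L2_def power_mult_distrib)

lemma L2_diff: assumes "s \<in> L2 M" "t \<in> L2 M" shows "(\<lambda>z. s z - t z) \<in> L2 M"
  using L2_add[OF assms(1) L2_scale[OF assms(2), of "-1"]] by simp

lemma L2_zero: "(\<lambda>z. 0) \<in> L2 M" by (auto simp: L2_def)

lemma L2_sum: assumes "\<And>i. i \<in> I \<Longrightarrow> f i \<in> L2 M" shows "(\<lambda>z. \<Sum>i\<in>I. f i z) \<in> L2 M"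
  using assms
proof (induction I rule: infinite_finite_induct)
  case (insert x F) then show ?case using L2_add[of "f x" M "\<lambda>z. \<Sum>i\<in>F. f i z"] by simp
qed (auto simp: L2_zero)

lemma N2_nonneg: "N2 M s \<ge> 0" by (simp add: N2_def)

lemma N2_add: assumes "s \<in> L2 M" "t \<in> L2 M"
  shows "N2 M (\<lambda>z. s z + t z) = N2 M s + 2 * (\<integral>z. s z * t z \<partial>M) + N2 M t"
proof -
  have "N2 M (\<lambda>z. s z + t z) = (\<integral>z. (s z)^2 + 2 * (s z * t z) + (t z)^2 \<partial>M)"
    unfolding N2_def by (rule Bochner_Integration.integral_cong) (auto simp: power2_sum)
  also have "\<dots> = N2 M s + 2 * (\<integral>z. s z * t z \<partial>M) + N2 M t"
    using assms L2_mult_int[OF assms] by (simp add: L2_def N2_def)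
  finally show ?thesis .
qed

lemma N2_scale: "N2 M (\<lambda>z. a * s z) = a^2 * N2 M s"
  by (simp add: N2_def power_mult_distrib)

lemma N2_zero_AE: assumes "s \<in> L2 M" "N2 M s = 0" shows "AE z in M. s z = 0"
proof -
  have "AE z in M. (s z)^2 = 0"
    using assms integral_nonneg_eq_0_iff_AE[of M "\<lambda>z. (s z)^2"] by (auto simp: L2_def N2_def)
  then show ?thesis by auto
qed

lemma N2_cong_AE: assumes "AE z in M. s z = t z" "s \<in> borel_measurable M" "t \<in> borel_measurable M" shows "N2 M s = N2 M t"
  unfolding N2_def using assms by (intro integral_cong_AE) (auto simp: L2_def)



lemma CS_aux: assumes "s \<in> L2 M" "t \<in> L2 M" "c > 0"
  shows "\<bar>\<integral>z. s z * t z \<partial>M\<bar> \<le> (c * N2 M s + N2 M t / c) / 2"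
proof -
  have pt: "\<bar>s z * t z\<bar> \<le> (c * (s z)^2 + (t z)^2 / c) / 2" for z
  proof -
    have "2 * \<bar>(c * s z) * t z\<bar> \<le> (c * s z)^2 + (t z)^2" by (rule abs_mult_le_sq)
    then have "2 * c * \<bar>s z * t z\<bar> \<le> c^2 * (s z)^2 + (t z)^2"
      using assms(3) by (simp add: abs_mult power_mult_distrib mult.assoc)
    then show ?thesis using assms(3) by (simp add: field_simps power2_eq_square)
  qed
  have "\<bar>\<integral>z. s z * t z \<partial>M\<bar> \<le> (\<integral>z. \<bar>s z * t z\<bar> \<partial>M)"
    by (rule integral_abs_bound)
  also have "\<dots> \<le> (\<integral>z. (c * (s z)^2 + (t z)^2 / c) / 2 \<partial>M)"
    using assms pt by (intro integral_mono) (auto simp: L2_def intro!: L2_mult_int)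
  also have "\<dots> = (c * N2 M s + N2 M t / c) / 2"
    using assms by (simp add: L2_def N2_def)
  finally show ?thesis .
qed

lemma CS: assumes "s \<in> L2 M" "t \<in> L2 M"
  shows "\<bar>\<integral>z. s z * t z \<partial>M\<bar> \<le> sqrt (N2 M s) * sqrt (N2 M t)"
proof (cases "N2 M s = 0 \<or> N2 M t = 0")
  case True
  then have "AE z in M. s z * t z = 0"
    using N2_zero_AE[OF assms(1)] N2_zero_AE[OF assms(2)] by auto
  then have "(\<integral>z. s z * t z \<partial>M) = (\<integral>z. 0 \<partial>M)"
    using assms by (intro integral_cong_AE) (auto simp: L2_def)
  then show ?thesis by (simp add: N2_nonneg)
next
  case False
  define a where "a = sqrt (N2 M s)"
  define b where "b = sqrt (N2 M t)"
  have a: "a > 0" "a^2 = N2 M s" using False N2_nonneg[of M s] by (auto simp: a_def)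
  have b: "b > 0" "b^2 = N2 M t" using False N2_nonneg[of M t] by (auto simp: b_def)
  have "\<bar>\<integral>z. s z * t z \<partial>M\<bar> \<le> ((b/a) * N2 M s + N2 M t / (b/a)) / 2"
    using CS_aux[OF assms, of "b/a"] a b by simp
  also have "\<dots> = a * b" using a(1) b(1) by (simp add: a(2)[symmetric] b(2)[symmetric] field_simps power2_eq_square)
  finally show ?thesis by (simp add: a_def b_def)
qed

lemma Minkowski: assumes "s \<in> L2 M" "t \<in> L2 M"
  shows "sqrt (N2 M (\<lambda>z. s z + t z)) \<le> sqrt (N2 M s) + sqrt (N2 M t)"
proof -
  have "N2 M (\<lambda>z. s z + t z) \<le> N2 M s + 2 * (sqrt (N2 M s) * sqrt (N2 M t)) + N2 M t"
    using N2_add[OF assms] CS[OF assms] by linarith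
  also have "\<dots> = (sqrt (N2 M s) + sqrt (N2 M t))^2"
    using N2_nonneg[of M s] N2_nonneg[of M t] by (simp add: power2_sum)
  finally show ?thesis
    by (metis N2_nonneg real_le_lsqrt add_nonneg_nonneg real_sqrt_ge_zero)
qed

lemma N2_diff_sym: "N2 M (\<lambda>z. s z - t z) = N2 M (\<lambda>z. t z - s z)"
  by (simp add: N2_def power2_commute)

lemma (in prob_space) L1_le_L2: assumes "s \<in> L2 M"
  shows "(\<integral>z. \<bar>s z\<bar> \<partial>M) \<le> sqrt (N2 M s)"
proof -
  have abs: "(\<lambda>z. \<bar>s z\<bar>) \<in> L2 M" using assms by (auto simp: L2_def)
  have one: "(\<lambda>z. 1) \<in> L2 M" by (auto simp: L2_def)
  have "(\<integral>z. \<bar>s z\<bar> \<partial>M) \<le> \<bar>\<integral>z. \<bar>s z\<bar> * 1 \<partial>M\<bar>" by simp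
  also have "\<dots> \<le> sqrt (N2 M (\<lambda>z. \<bar>s z\<bar>)) * sqrt (N2 M (\<lambda>z. 1))" by (rule CS[OF abs one])
  also have "\<dots> = sqrt (N2 M s)" by (simp add: N2_def prob_space)
  finally show ?thesis .
qed



lemma (in prob_space) L2_complete:
  assumes u: "\<And>n. u n \<in> L2 M"
    and cauchy: "\<And>e. e > 0 \<Longrightarrow> \<exists>K. \<forall>m\<ge>K. \<forall>n\<ge>K. N2 M (\<lambda>z. u m z - u n z) < e"
  shows "\<exists>s\<in>L2 M. \<exists>r. strict_mono r \<and> (AE z in M. (\<lambda>k. u (r k) z) \<longlonglongrightarrow> s z)
            \<and> (\<lambda>n. N2 M (\<lambda>z. u n z - s z)) \<longlonglongrightarrow> 0"
proof -
  have um[measurable]: "\<And>n. u n \<in> borel_measurable M" using u by (auto simp: L2_def)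
  have "\<forall>k. \<exists>K. \<forall>m\<ge>K. \<forall>n\<ge>K. N2 M (\<lambda>z. u m z - u n z) < (1/4)^k"
    using cauchy by simp
  from choice[OF this] obtain K where K0: "\<forall>k. \<forall>m\<ge>K k. \<forall>n\<ge>K k. N2 M (\<lambda>z. u m z - u n z) < (1/4)^k"
    by blast
  have K: "\<And>k m n. m \<ge> K k \<Longrightarrow> n \<ge> K k \<Longrightarrow> N2 M (\<lambda>z. u m z - u n z) < (1/4)^k"
    using K0 by blast
  define r where "r = rec_nat (K 0) (\<lambda>k rk. max (K (Suc k)) (Suc rk))"
  have r0: "r 0 = K 0" and rS: "\<And>k. r (Suc k) = max (K (Suc k)) (Suc (r k))" by (simp_all add: r_def)
  have rmono: "strict_mono r" unfolding strict_mono_Suc_iff by (metis rS lessI max.strict_coboundedI2)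
  have rK: "r k \<ge> K k" for k by (cases k) (simp_all add: r0 rS)
  define d where "d = (\<lambda>k z. \<bar>u (r (Suc k)) z - u (r k) z\<bar>)"
  have dm[measurable]: "d k \<in> borel_measurable M" for k unfolding d_def by measurable
  have dL2: "(\<lambda>z. u (r (Suc k)) z - u (r k) z) \<in> L2 M" for k by (rule L2_diff[OF u u])
  have dint: "integrable M (d k)" for k
  proof -
    have "integrable M (\<lambda>z. u (r (Suc k)) z - u (r k) z)"
      by (rule square_integrable_imp_integrable[OF L2_D(1)[OF dL2] L2_D(2)[OF dL2]])
    then have "integrable M (\<lambda>z. \<bar>u (r (Suc k)) z - u (r k) z\<bar>)" by (rule integrable_abs)
    then show ?thesis by (simp add: d_def)
  qed
  have dbound: "(\<integral>z. d k z \<partial>M) \<le> (1/2)^k" for k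
  proof -
    have "(\<integral>z. d k z \<partial>M) \<le> sqrt (N2 M (\<lambda>z. u (r (Suc k)) z - u (r k) z))"
      unfolding d_def by (rule L1_le_L2[OF dL2])
    also have "\<dots> \<le> sqrt ((1/4)^k)"
    proof -
      have "r k \<le> r (Suc k)" using rmono by (simp add: strict_mono_leD)
      then have "K k \<le> r (Suc k)" using rK[of k] by linarith
      then have "N2 M (\<lambda>z. u (r (Suc k)) z - u (r k) z) < (1/4)^k" using K rK by blast
      then show ?thesis by (intro real_sqrt_le_mono) simp
    qed
    also have "\<dots> = (1/2)^k" by (simp add: real_sqrt_power real_sqrt_divide)
    finally show ?thesis .
  qed
  have "(\<integral>\<^sup>+z. (\<Sum>k. ennreal (d k z)) \<partial>M) = (\<Sum>k. \<integral>\<^sup>+z. ennreal (d k z) \<partial>M)"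
    by (rule nn_integral_suminf) measurable
  also have "\<dots> = (\<Sum>k. ennreal (\<integral>z. d k z \<partial>M))"
    using dint by (intro suminf_cong nn_integral_eq_integral) (auto simp: d_def)
  also have "\<dots> \<le> (\<Sum>k. ennreal ((1/2)^k))"
    using dbound by (intro suminf_le summableI) (auto intro: ennreal_leI)
  also have "\<dots> = ennreal 2"
    using geometric_sums[of "1/2::real"] by (intro suminf_ennreal_eq) auto
  finally have "(\<integral>\<^sup>+z. (\<Sum>k. ennreal (d k z)) \<partial>M) \<le> ennreal 2" .
  then have fin0: "(\<integral>\<^sup>+z. (\<Sum>k. ennreal (d k z)) \<partial>M) < \<infinity>"
    using ennreal_less_top[of 2] by (simp add: le_less_trans)
  then have fin: "(\<integral>\<^sup>+z. (\<Sum>k. ennreal (d k z)) \<partial>M) \<noteq> \<infinity>" by simp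
  have "AE z in M. (\<Sum>k. ennreal (d k z)) \<noteq> \<infinity>"
    by (rule nn_integral_PInf_AE[OF _ fin]) measurable
  then have AEconv: "AE z in M. convergent (\<lambda>k. u (r k) z)"
  proof (rule AE_mp, intro AE_I2 impI)
    fix z assume "(\<Sum>k. ennreal (d k z)) \<noteq> \<infinity>"
    then have "summable (\<lambda>k. d k z)" by (intro summable_suminf_not_top) (auto simp: d_def)
    then have "summable (\<lambda>k. u (r (Suc k)) z - u (r k) z)"
      unfolding d_def by (rule summable_rabs_cancel)
    then have "convergent (\<lambda>n. \<Sum>k<n. u (r (Suc k)) z - u (r k) z)"
      using summable_iff_convergent by blast
    then have "convergent (\<lambda>n. u (r 0) z + (\<Sum>k<n. u (r (Suc k)) z - u (r k) z))"
      by (intro convergent_add convergent_const)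
    then show "convergent (\<lambda>k. u (r k) z)"
      by (simp add: sum_lessThan_telescope[of "\<lambda>k. u (r k) z"])
  qed
  define s where "s = (\<lambda>z. lim (\<lambda>k. u (r k) z))"
  have sm[measurable]: "s \<in> borel_measurable M" unfolding s_def by measurable
  have AElim: "AE z in M. (\<lambda>k. u (r k) z) \<longlonglongrightarrow> s z"
    using AEconv by eventually_elim (simp add: s_def convergent_LIMSEQ_iff)
  have main: "N2 M (\<lambda>z. u n z - s z) \<le> e \<and> (\<lambda>z. u n z - s z) \<in> L2 M"
    if e: "e > 0" and n: "\<forall>m\<ge>Ke. \<forall>n\<ge>Ke. N2 M (\<lambda>z. u m z - u n z) < e" "n \<ge> Ke" for e n Ke
  proof -
    have AE1: "AE z in M. liminf (\<lambda>k. ennreal ((u n z - u (r k) z)^2)) = ennreal ((u n z - s z)^2)"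
      using AElim
    proof eventually_elim
      case (elim z)
      have "(\<lambda>k. ennreal ((u n z - u (r k) z)^2)) \<longlonglongrightarrow> ennreal ((u n z - s z)^2)"
        by (intro tendsto_ennrealI tendsto_intros elim)
      then show ?case by (intro lim_imp_Liminf) auto
    qed
    have "(\<integral>\<^sup>+z. ennreal ((u n z - s z)^2) \<partial>M) = (\<integral>\<^sup>+z. liminf (\<lambda>k. ennreal ((u n z - u (r k) z)^2)) \<partial>M)"
      using AE1 by (intro nn_integral_cong_AE) auto
    also have "\<dots> \<le> liminf (\<lambda>k. \<integral>\<^sup>+z. ennreal ((u n z - u (r k) z)^2) \<partial>M)"
      by (rule nn_integral_liminf) measurable
    also have "\<dots> = liminf (\<lambda>k. ennreal (N2 M (\<lambda>z. u n z - u (r k) z)))"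
      unfolding N2_def using L2_diff[OF u u]
      by (intro arg_cong[where f="liminf"] ext nn_integral_eq_integral) (auto simp: L2_def)
    also have "\<dots> \<le> limsup (\<lambda>k. ennreal (N2 M (\<lambda>z. u n z - u (r k) z)))"
      by (rule Liminf_le_Limsup) simp
    also have "\<dots> \<le> ennreal e"
    proof (rule Limsup_bounded)
      show "\<forall>\<^sub>F k in sequentially. ennreal (N2 M (\<lambda>z. u n z - u (r k) z)) \<le> ennreal e"
        using eventually_ge_at_top[of Ke]
      proof eventually_elim
        case (elim k)
        have "r k \<ge> k" using rmono by (simp add: seq_suble)
        then show ?case using n elim by (intro ennreal_leI) (auto intro!: less_imp_le)
      qed
    qed
    finally have le: "(\<integral>\<^sup>+z. ennreal ((u n z - s z)^2) \<partial>M) \<le> ennreal e" .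
    have lt: "(\<integral>\<^sup>+z. ennreal ((u n z - s z)^2) \<partial>M) < \<infinity>"
      using le ennreal_less_top[of e] by (simp add: le_less_trans)
    have int: "integrable M (\<lambda>z. (u n z - s z)^2)"
      by (rule integrableI_nonneg[OF _ _ lt]) auto
    have "ennreal (N2 M (\<lambda>z. u n z - s z)) \<le> ennreal e"
      using le unfolding N2_def by (subst nn_integral_eq_integral[symmetric, OF int]) auto
    then have "N2 M (\<lambda>z. u n z - s z) \<le> e" using e by (simp add: ennreal_le_iff)
    then show ?thesis using int by (auto simp: L2_def)
  qed
  obtain K1 where K1: "\<forall>m\<ge>K1. \<forall>n\<ge>K1. N2 M (\<lambda>z. u m z - u n z) < 1" using cauchy[of 1] by auto
  have "(\<lambda>z. u K1 z - s z) \<in> L2 M" using main[OF _ K1] by auto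
  then have "(\<lambda>z. u K1 z - (u K1 z - s z)) \<in> L2 M" by (rule L2_diff[OF u])
  then have sL2: "s \<in> L2 M" by simp
  have lim: "(\<lambda>n. N2 M (\<lambda>z. u n z - s z)) \<longlonglongrightarrow> 0"
  proof (rule LIMSEQ_I)
    fix e :: real assume "e > 0"
    then obtain Ke where Ke: "\<forall>m\<ge>Ke. \<forall>n\<ge>Ke. N2 M (\<lambda>z. u m z - u n z) < e/2"
      using cauchy[of "e/2"] by auto
    show "\<exists>no. \<forall>n\<ge>no. norm (N2 M (\<lambda>z. u n z - s z) - 0) < e"
    proof (intro exI allI impI)
      fix n assume "n \<ge> Ke"
      then have "N2 M (\<lambda>z. u n z - s z) \<le> e/2" using main[of "e/2" Ke n] Ke \<open>e > 0\<close> by auto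
      then show "norm (N2 M (\<lambda>z. u n z - s z) - 0) < e" using \<open>e > 0\<close> N2_nonneg[of M] by simp
    qed
  qed
  show ?thesis using sL2 rmono AElim lim by blast
qed



lemma N2_diff: assumes "s \<in> L2 M" "t \<in> L2 M"
  shows "N2 M (\<lambda>z. s z - t z) = N2 M s - 2 * (\<integral>z. s z * t z \<partial>M) + N2 M t"
proof -
  have "N2 M (\<lambda>z. s z + (-1) * t z) = N2 M s + 2 * (\<integral>z. s z * ((-1) * t z) \<partial>M) + N2 M (\<lambda>z. (-1) * t z)"
    by (rule N2_add[OF assms(1) L2_scale[OF assms(2)]])
  moreover have "N2 M (\<lambda>z. - t z) = N2 M t" by (simp add: N2_def)
  ultimately show ?thesis by (simp add: N2_scale)
qed

lemma N2_add_le: assumes "s \<in> L2 M" "t \<in> L2 M"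
  shows "N2 M (\<lambda>z. s z + t z) \<le> 2 * N2 M s + 2 * N2 M t"
proof -
  have "N2 M (\<lambda>z. s z + t z) + N2 M (\<lambda>z. s z - t z) = 2 * N2 M s + 2 * N2 M t"
    using N2_add[OF assms] N2_diff[OF assms] by simp
  then show ?thesis using N2_nonneg[of M "\<lambda>z. s z - t z"] by linarith
qed

lemma Riesz:
  fixes M :: "'a measure" and T :: "('a \<Rightarrow> real) set" and L :: "('a \<Rightarrow> real) \<Rightarrow> real"
  assumes P: "prob_space M"
    and TL2: "\<And>s. s \<in> T \<Longrightarrow> s \<in> L2 M"
    and T0: "(\<lambda>z. 0) \<in> T"
    and Tadd: "\<And>s t. s \<in> T \<Longrightarrow> t \<in> T \<Longrightarrow> (\<lambda>z. s z + t z) \<in> T"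
    and Tscale: "\<And>s a. s \<in> T \<Longrightarrow> (\<lambda>z. a * s z) \<in> T"
    and Tclosed: "\<And>s u. s \<in> L2 M \<Longrightarrow> (\<And>n. u n \<in> T) \<Longrightarrow> (\<lambda>n. N2 M (\<lambda>z. u n z - s z)) \<longlonglongrightarrow> 0 \<Longrightarrow> s \<in> T"
    and Ladd: "\<And>s t. s \<in> T \<Longrightarrow> t \<in> T \<Longrightarrow> L (\<lambda>z. s z + t z) = L s + L t"
    and Lscale: "\<And>s a. s \<in> T \<Longrightarrow> L (\<lambda>z. a * s z) = a * L s"
    and Lbound: "\<And>s. s \<in> T \<Longrightarrow> \<bar>L s\<bar> \<le> C * sqrt (N2 M s)"
    and C: "C \<ge> 0"
  shows "\<exists>f\<in>T. \<forall>s\<in>T. L s = (\<integral>z. s z * f z \<partial>M)"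
proof (cases "\<forall>s\<in>T. L s = 0")
  case True
  then show ?thesis using T0 by (intro bexI[of _ "\<lambda>z. 0"]) auto
next
  case False
  then obtain s0 where s0: "s0 \<in> T" "L s0 \<noteq> 0" by auto
  have Tdiff: "(\<lambda>z. s z - t z) \<in> T" if "s \<in> T" "t \<in> T" for s t
    using Tadd[OF that(1) Tscale[OF that(2), of "-1"]] by simp
  have Ldiff: "L (\<lambda>z. s z - t z) = L s - L t" if "s \<in> T" "t \<in> T" for s t
    using Ladd[OF that(1) Tscale[OF that(2), of "-1"]] Lscale[OF that(2), of "-1"] by simp
  have L0: "L (\<lambda>z. 0) = 0" using Lscale[OF T0, of 0] by simp
  define SS where "SS = {L s | s. s \<in> T \<and> N2 M s \<le> 1}"
  define m where "m = Sup SS"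
  have SSne: "0 \<in> SS" unfolding SS_def using T0 L0 by (auto simp: N2_def intro!: exI[of _ "\<lambda>z. 0"])
  have SSbdd: "bdd_above SS"
  proof (rule bdd_aboveI)
    fix x assume "x \<in> SS"
    then obtain s where s: "s \<in> T" "N2 M s \<le> 1" "x = L s" by (auto simp: SS_def)
    have "x \<le> \<bar>L s\<bar>" using s by simp
    also have "\<dots> \<le> C * sqrt (N2 M s)" by (rule Lbound[OF s(1)])
    also have "\<dots> \<le> C * 1" using s C by (intro mult_left_mono) auto
    finally show "x \<le> C" by simp
  qed
  have m0: "m \<ge> 0" unfolding m_def using SSne SSbdd by (rule cSup_upper)
  have key: "L s \<le> m * sqrt (N2 M s)" if s: "s \<in> T" for s
  proof (cases "N2 M s = 0")
    case True
    then show ?thesis using Lbound[OF s] by simp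
  next
    case False
    define q where "q = sqrt (N2 M s)"
    have q: "q > 0" "q^2 = N2 M s" using False N2_nonneg[of M s] by (auto simp: q_def)
    define v where "v = (\<lambda>z. (1/q) * s z)"
    have vT: "v \<in> T" unfolding v_def by (rule Tscale[OF s])
    have "N2 M v = (1/q)^2 * N2 M s" unfolding v_def by (rule N2_scale)
    also have "\<dots> = 1" using q(1) by (simp add: q(2)[symmetric] field_simps)
    finally have "L v \<in> SS" unfolding SS_def using vT by auto
    then have "L v \<le> m" unfolding m_def using SSbdd by (rule cSup_upper)
    moreover have "L v = L s / q" unfolding v_def using Lscale[OF s, of "1/q"] by simp
    ultimately have "L s / q \<le> m" by simp
    then show ?thesis using q by (simp add: q_def[symmetric] pos_divide_le_eq mult.commute)
  qed
  have mpos: "m > 0"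
  proof -
    define sg where "sg = (if L s0 > 0 then 1 else (-1::real))"
    have "L (\<lambda>z. sg * s0 z) = sg * L s0" by (rule Lscale[OF s0(1)])
    also have "\<dots> > 0" using s0 by (auto simp: sg_def)
    finally have "0 < m * sqrt (N2 M (\<lambda>z. sg * s0 z))" using key[OF Tscale[OF s0(1), of sg]] by linarith
    then show ?thesis using m0 by (cases "m = 0") auto
  qed
  have "\<forall>n. \<exists>s. s \<in> T \<and> N2 M s \<le> 1 \<and> m - 1 / (real n + 1) < L s"
  proof
    fix n
    have lt: "m - 1 / (real n + 1) < Sup SS" unfolding m_def[symmetric] by simp
    have ne: "SS \<noteq> {}" using SSne by auto
    obtain x where "x \<in> SS" "m - 1 / (real n + 1) < x" using less_cSupE[OF lt ne] by blast
    then show "\<exists>s. s \<in> T \<and> N2 M s \<le> 1 \<and> m - 1 / (real n + 1) < L s" by (auto simp: SS_def)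
  qed
  then obtain u where u: "\<And>n. u n \<in> T" "\<And>n. N2 M (u n) \<le> 1" "\<And>n. m - 1 / (real n + 1) < L (u n)"
    by metis
  have uL2: "\<And>n. u n \<in> L2 M" using u(1) TL2 by blast
  have cauchy: "\<exists>K. \<forall>i\<ge>K. \<forall>j\<ge>K. N2 M (\<lambda>z. u i z - u j z) < e" if e: "e > 0" for e
  proof -
    have "0 < min m (e * m / 8)" using mpos e by simp
    then obtain K :: nat where K0: "inverse (real (Suc K)) < min m (e * m / 8)"
      using reals_Archimedean by blast
    then have K: "1 / (real K + 1) < min m (e * m / 8)" by (simp add: inverse_eq_divide add.commute)
    show ?thesis
    proof (intro exI allI impI)
      fix i j assume ij: "i \<ge> K" "j \<ge> K"
      define dd where "dd = 1 / (real K + 1)"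
      have di: "1 / (real i + 1) \<le> dd" using ij unfolding dd_def by (intro divide_left_mono) auto
      have dj: "1 / (real j + 1) \<le> dd" using ij unfolding dd_def by (intro divide_left_mono) auto
      have dd: "dd < m" "dd < e * m / 8" "dd > 0" using K by (auto simp: dd_def)
      have "2 * m - 2 * dd < L (u i) + L (u j)" using u(3)[of i] u(3)[of j] di dj by linarith
      also have "\<dots> = L (\<lambda>z. u i z + u j z)" by (rule Ladd[OF u(1) u(1), symmetric])
      also have "\<dots> \<le> m * sqrt (N2 M (\<lambda>z. u i z + u j z))" by (rule key[OF Tadd[OF u(1) u(1)]])
      finally have lo: "2 * (1 - dd / m) \<le> sqrt (N2 M (\<lambda>z. u i z + u j z))"
        using mpos by (simp add: field_simps)
      have pos: "0 \<le> 2 * (1 - dd / m)" using dd mpos by (simp add: field_simps)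
      have "(2 * (1 - dd / m))^2 \<le> N2 M (\<lambda>z. u i z + u j z)"
        using power_mono[OF lo pos, of 2] N2_nonneg[of M] by simp
      moreover have "4 * (1 - 2 * (dd / m)) \<le> (2 * (1 - dd / m))^2"
        by (simp add: power2_eq_square algebra_simps)
      ultimately have A: "4 - 8 * (dd / m) \<le> N2 M (\<lambda>z. u i z + u j z)" by simp
      have "N2 M (\<lambda>z. u i z + u j z) + N2 M (\<lambda>z. u i z - u j z) = 2 * N2 M (u i) + 2 * N2 M (u j)"
        using N2_add[OF uL2 uL2, of i j] N2_diff[OF uL2 uL2, of i j] by simp
      then have "N2 M (\<lambda>z. u i z - u j z) \<le> 8 * (dd / m)" using A u(2)[of i] u(2)[of j] by linarith
      also have "\<dots> < e" using dd(2) mpos by (simp add: field_simps)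
      finally show "N2 M (\<lambda>z. u i z - u j z) < e" .
    qed
  qed
  obtain s r where sL2: "s \<in> L2 M" and lim: "(\<lambda>n. N2 M (\<lambda>z. u n z - s z)) \<longlonglongrightarrow> 0"
    using prob_space.L2_complete[OF P uL2 cauchy] by blast
  have sT: "s \<in> T" by (rule Tclosed[OF sL2 u(1) lim])
  have limsq: "(\<lambda>n. sqrt (N2 M (\<lambda>z. u n z - s z))) \<longlonglongrightarrow> 0"
    using tendsto_real_sqrt[OF lim] by simp
  have Ns1: "sqrt (N2 M s) \<le> 1"
  proof (rule LIMSEQ_le_const[where X="\<lambda>n. 1 + sqrt (N2 M (\<lambda>z. u n z - s z))"])
    show "(\<lambda>n. 1 + sqrt (N2 M (\<lambda>z. u n z - s z))) \<longlonglongrightarrow> 1"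
      using tendsto_add[OF tendsto_const limsq, of 1] by simp
    show "\<exists>N. \<forall>n\<ge>N. sqrt (N2 M s) \<le> 1 + sqrt (N2 M (\<lambda>z. u n z - s z))"
    proof (intro exI allI impI)
      fix n :: nat
      have dL2: "(\<lambda>z. s z - u n z) \<in> L2 M" by (rule L2_diff[OF sL2 uL2])
      have "sqrt (N2 M (\<lambda>z. u n z + (s z - u n z))) \<le> sqrt (N2 M (u n)) + sqrt (N2 M (\<lambda>z. s z - u n z))"
        by (rule Minkowski[OF uL2 dL2])
      then have h: "sqrt (N2 M s) \<le> sqrt (N2 M (u n)) + sqrt (N2 M (\<lambda>z. u n z - s z))"
        using N2_diff_sym[of M s "u n"] by simp
      have "sqrt (N2 M (u n)) \<le> 1" using u(2)[of n] by simp
      then show "sqrt (N2 M s) \<le> 1 + sqrt (N2 M (\<lambda>z. u n z - s z))" using h by linarith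
    qed
  qed
  have Ls_ge: "m \<le> L s"
  proof (rule LIMSEQ_le_const2[where X="\<lambda>n. m - 1 / (real n + 1) - C * sqrt (N2 M (\<lambda>z. u n z - s z))"])
    have "(\<lambda>n. 1 / (real n + 1)) \<longlonglongrightarrow> 0"
      using LIMSEQ_inverse_real_of_nat by (simp add: inverse_eq_divide add.commute)
    then have "(\<lambda>n. m - 1 / (real n + 1) - C * sqrt (N2 M (\<lambda>z. u n z - s z))) \<longlonglongrightarrow> m - 0 - C * 0"
      by (intro tendsto_diff tendsto_mult tendsto_const limsq)
    then show "(\<lambda>n. m - 1 / (real n + 1) - C * sqrt (N2 M (\<lambda>z. u n z - s z))) \<longlonglongrightarrow> m"
      by simp
    show "\<exists>N. \<forall>n\<ge>N. m - 1 / (real n + 1) - C * sqrt (N2 M (\<lambda>z. u n z - s z)) \<le> L s"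
    proof (intro exI allI impI)
      fix n :: nat
      have "L (u n) - L s = L (\<lambda>z. u n z - s z)" by (rule Ldiff[OF u(1) sT, symmetric])
      also have "\<dots> \<le> C * sqrt (N2 M (\<lambda>z. u n z - s z))"
        using Lbound[OF Tdiff[OF u(1) sT], of n] by simp
      finally show "m - 1 / (real n + 1) - C * sqrt (N2 M (\<lambda>z. u n z - s z)) \<le> L s"
        using u(3)[of n] by linarith
    qed
  qed
  have "m * sqrt (N2 M s) \<le> m * 1" using Ns1 mpos by (intro mult_left_mono) auto
  then have Ls: "L s = m" using key[OF sT] Ls_ge by linarith
  have Ns: "N2 M s = 1"
  proof -
    have "m \<le> m * sqrt (N2 M s)" using key[OF sT] Ls by simp
    then have "1 \<le> sqrt (N2 M s)" using mpos by simp
    then have "sqrt (N2 M s) = 1" using Ns1 by simp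
    then show ?thesis by simp
  qed
  have var: "L t \<le> m * (\<integral>z. s z * t z \<partial>M)" if tT: "t \<in> T" for t
  proof (rule ccontr)
    assume neg: "\<not> L t \<le> m * (\<integral>z. s z * t z \<partial>M)"
    define I where "I = (\<integral>z. s z * t z \<partial>M)"
    define Lt where "Lt = L t"
    define Nt where "Nt = N2 M t"
    define dl where "dl = Lt - m * I"
    have dl: "dl > 0" using neg by (simp add: dl_def Lt_def I_def)
    have Nt0: "Nt \<ge> 0" by (simp add: Nt_def N2_nonneg)
    define A where "A = m^2 * Nt + 1"
    have "0 \<le> m^2 * Nt" using Nt0 by simp
    then have A: "A > 0" unfolding A_def by linarith
    define B where "B = 2 * (\<bar>Lt\<bar> + 1)"
    have B: "B > 0" unfolding B_def by (simp add: add_nonneg_pos)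
    define a where "a = min (m / B) (m * dl / A)"
    have p1: "m / B > 0" using mpos B by simp
    have p2: "m * dl / A > 0" using mpos dl A by simp
    have apos: "a > 0" using p1 p2 by (simp add: a_def)
    have a1: "a * \<bar>Lt\<bar> \<le> m / 2"
    proof -
      have "a \<le> m / B" by (simp add: a_def)
      then have "a * B \<le> m" using B by (simp add: le_divide_eq)
      then have "2 * (a * \<bar>Lt\<bar>) + 2 * a \<le> m" by (simp add: B_def algebra_simps)
      then show ?thesis using apos by linarith
    qed
    have "a \<le> m * dl / A" by (simp add: a_def)
    then have a2: "a * A \<le> m * dl" using A by (simp add: le_divide_eq)
    have tL2: "t \<in> L2 M" by (rule TL2[OF tT])
    have sL2': "s \<in> L2 M" by (rule sL2)
    define w where "w = (\<lambda>z. s z + a * t z)"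
    have wT: "w \<in> T" unfolding w_def by (rule Tadd[OF sT Tscale[OF tT]])
    have Lw: "L w = m + a * Lt" unfolding w_def Lt_def using Ladd[OF sT Tscale[OF tT]] Lscale[OF tT] Ls by simp
    have Nw: "N2 M w = 1 + 2 * a * I + a^2 * Nt"
    proof -
      have "N2 M w = N2 M s + 2 * (\<integral>z. s z * (a * t z) \<partial>M) + N2 M (\<lambda>z. a * t z)"
        unfolding w_def by (rule N2_add[OF sL2 L2_scale[OF tL2]])
      also have "(\<integral>z. s z * (a * t z) \<partial>M) = a * I"
        unfolding I_def by (simp add: mult.left_commute)
      finally show ?thesis using Ns by (simp add: N2_scale Nt_def)
    qed
    have "a * (- Lt) \<le> a * \<bar>Lt\<bar>" using apos by (intro mult_left_mono) auto
    then have x0: "0 \<le> m + a * Lt" using a1 mpos by simp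
    have "m + a * Lt \<le> m * sqrt (N2 M w)" using key[OF wT] Lw by simp
    then have "(m + a * Lt)^2 \<le> (m * sqrt (N2 M w))^2" using x0 by (rule power_mono)
    also have "\<dots> = m^2 * (1 + 2 * a * I + a^2 * Nt)" using Nw N2_nonneg[of M w] by (simp add: power_mult_distrib)
    finally have h1: "(m + a * Lt)^2 \<le> m^2 * (1 + 2 * a * I + a^2 * Nt)" .
    have e1: "(m + a * Lt)^2 = m^2 + 2 * a * m * Lt + a^2 * Lt^2" by (simp add: power2_eq_square algebra_simps)
    have e2: "m^2 * (1 + 2 * a * I + a^2 * Nt) = m^2 + 2 * a * m * (m * I) + a * (a * (m^2 * Nt))"
      by (simp add: power2_eq_square algebra_simps)
    have "a * (2 * m * dl) \<le> a * (a * (m^2 * Nt)) - a^2 * Lt^2"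
      using h1 unfolding e1 e2 dl_def by (simp add: algebra_simps)
    also have "\<dots> \<le> a * (a * (m^2 * Nt))" by simp
    finally have "2 * m * dl \<le> a * (m^2 * Nt)" using apos by simp
    also have "\<dots> \<le> a * A" using apos by (simp add: A_def)
    also have "\<dots> \<le> m * dl" by (rule a2)
    finally have "2 * m * dl \<le> m * dl" .
    moreover have "m * dl > 0" using mpos dl by simp
    ultimately show False by linarith
  qed
  show ?thesis
  proof (intro bexI[of _ "\<lambda>z. m * s z"] ballI)
    show "(\<lambda>z. m * s z) \<in> T" by (rule Tscale[OF sT])
    fix t assume tT: "t \<in> T"
    have tL2: "t \<in> L2 M" by (rule TL2[OF tT])
    have "L (\<lambda>z. (-1) * t z) \<le> m * (\<integral>z. s z * ((-1) * t z) \<partial>M)" by (rule var[OF Tscale[OF tT]])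
    then have "L t \<ge> m * (\<integral>z. s z * t z \<partial>M)" using Lscale[OF tT, of "-1"] by simp
    then have "L t = m * (\<integral>z. s z * t z \<partial>M)" using var[OF tT] by simp
    also have "\<dots> = (\<integral>z. t z * (m * s z) \<partial>M)" by (simp add: mult_ac)
    finally show "L t = (\<integral>z. t z * (m * s z) \<partial>M)" .
  qed
qed



lemma pyth: "inner a b = 0 \<Longrightarrow> (norm (a + b))^2 = (norm a)^2 + (norm (b::'a::real_inner))^2"
  by (simp add: power2_norm_eq_inner inner_add_left inner_add_right inner_commute)

lemma summable_Cauchy_complete:
  fixes f :: "nat \<Rightarrow> 'a::{real_normed_vector, complete_space}"
  assumes C: "\<And>e. e > 0 \<Longrightarrow> \<exists>N. \<forall>m\<ge>N. \<forall>n. norm (sum f {m..<n}) < e"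
  shows "summable f"
proof -
  have "Cauchy (\<lambda>n. \<Sum>k<n. f k)"
  proof (rule metric_CauchyI)
    fix e :: real assume "e > 0"
    then obtain N where N: "\<forall>m\<ge>N. \<forall>n. norm (sum f {m..<n}) < e" using C by blast
    have "dist (\<Sum>k<m. f k) (\<Sum>k<n. f k) < e" if "m \<ge> N" "n \<ge> N" for m n
    proof (cases "m \<le> n")
      case True
      have "(\<Sum>k<n. f k) - (\<Sum>k<m. f k) = sum f {m..<n}"
        using sum_diff_nat_ivl[of 0 m n f] True by (simp add: lessThan_atLeast0)
      moreover have "dist (\<Sum>k<m. f k) (\<Sum>k<n. f k) = norm ((\<Sum>k<n. f k) - (\<Sum>k<m. f k))"
        by (simp add: dist_norm norm_minus_commute)
      ultimately show ?thesis using N that by simp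
    next
      case False
      have "(\<Sum>k<m. f k) - (\<Sum>k<n. f k) = sum f {n..<m}"
        using sum_diff_nat_ivl[of 0 n m f] False by (simp add: lessThan_atLeast0)
      then show ?thesis using N that by (simp add: dist_norm)
    qed
    then show "\<exists>M. \<forall>m\<ge>M. \<forall>n\<ge>M. dist (\<Sum>k<m. f k) (\<Sum>k<n. f k) < e" by blast
  qed
  then have "convergent (\<lambda>n. \<Sum>k<n. f k)" by (rule Cauchy_convergent)
  then show ?thesis by (simp add: summable_iff_convergent)
qed

context
  fixes hs :: "nat \<Rightarrow> 'h::{real_inner, complete_space}"
  assumes onb: "onb_padded hs"
begin

lemma hs_orth: "j \<noteq> k \<Longrightarrow> inner (hs j) (hs k) = 0"
  using onb by (auto simp: onb_padded_def)

lemma hs_norm: "norm (hs k) \<le> 1"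
  using onb unfolding onb_padded_def by (metis norm_zero order_refl zero_le_one)

lemma orth_sum_norm: "finite K \<Longrightarrow> (norm (\<Sum>k\<in>K. c k *\<^sub>R hs k))^2 = (\<Sum>k\<in>K. (c k)^2 * (norm (hs k))^2)"
proof (induction K rule: finite_induct)
  case (insert x F)
  have "inner (c x *\<^sub>R hs x) (\<Sum>k\<in>F. c k *\<^sub>R hs k) = (\<Sum>k\<in>F. c x * c k * inner (hs x) (hs k))"
    by (simp add: inner_sum_right mult_ac)
  also have "\<dots> = 0" using insert(2) hs_orth by (intro sum.neutral) (metis mult_zero_right)
  finally have o: "inner (c x *\<^sub>R hs x) (\<Sum>k\<in>F. c k *\<^sub>R hs k) = 0" .
  have "(norm (\<Sum>k\<in>insert x F. c k *\<^sub>R hs k))^2 = (norm (c x *\<^sub>R hs x + (\<Sum>k\<in>F. c k *\<^sub>R hs k)))^2"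
    using insert by simp
  also have "\<dots> = (norm (c x *\<^sub>R hs x))^2 + (norm (\<Sum>k\<in>F. c k *\<^sub>R hs k))^2"
    using o by (rule pyth)
  also have "\<dots> = (\<Sum>k\<in>insert x F. (c k)^2 * (norm (hs k))^2)"
    using insert by (simp add: power_mult_distrib)
  finally show ?case .
qed simp

lemma orth_sum_le: "finite K \<Longrightarrow> (norm (\<Sum>k\<in>K. c k *\<^sub>R hs k))^2 \<le> (\<Sum>k\<in>K. (c k)^2)"
proof -
  assume K: "finite K"
  have "(\<Sum>k\<in>K. (c k)^2 * (norm (hs k))^2) \<le> (\<Sum>k\<in>K. (c k)^2)"
  proof (intro sum_mono)
    fix k
    have "(norm (hs k))^2 \<le> 1" using hs_norm[of k] by (simp add: power_le_one)
    then show "(c k)^2 * (norm (hs k))^2 \<le> (c k)^2" by (simp add: mult_left_le)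
  qed
  then show ?thesis using orth_sum_norm[OF K] by simp
qed

lemma summable_orth:
  assumes "summable (\<lambda>k. (c k)^2)" shows "summable (\<lambda>k. c k *\<^sub>R hs k)"
proof (rule summable_Cauchy_complete)
  fix e :: real assume e: "e > 0"
  from assms[unfolded summable_Cauchy, rule_format, of "e^2"] e
  obtain N where N: "\<And>m n. m \<ge> N \<Longrightarrow> norm (\<Sum>k\<in>{m..<n}. (c k)^2) < e^2" by auto
  show "\<exists>N. \<forall>m\<ge>N. \<forall>n. norm (sum (\<lambda>k. c k *\<^sub>R hs k) {m..<n}) < e"
  proof (intro exI allI impI)
    fix m n assume "m \<ge> N"
    have "(norm (\<Sum>k\<in>{m..<n}. c k *\<^sub>R hs k))^2 \<le> (\<Sum>k\<in>{m..<n}. (c k)^2)" by (rule orth_sum_le) simp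
    also have "\<dots> < e^2" using N[OF \<open>m \<ge> N\<close>, of n] by simp
    finally show "norm (sum (\<lambda>k. c k *\<^sub>R hs k) {m..<n}) < e"
      using e by (smt (verit) power_mono norm_ge_zero)
  qed
qed

lemma norm_suminf_orth:
  assumes "summable (\<lambda>k. (c k)^2)" shows "(norm (\<Sum>k. c k *\<^sub>R hs k))^2 \<le> (\<Sum>k. (c k)^2)"
proof -
  have "(\<lambda>n. \<Sum>k<n. c k *\<^sub>R hs k) \<longlonglongrightarrow> (\<Sum>k. c k *\<^sub>R hs k)"
    by (rule summable_LIMSEQ[OF summable_orth[OF assms]])
  then have "(\<lambda>n. (norm (\<Sum>k<n. c k *\<^sub>R hs k))^2) \<longlonglongrightarrow> (norm (\<Sum>k. c k *\<^sub>R hs k))^2"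
    by (intro tendsto_intros)
  moreover have "(norm (\<Sum>k<n. c k *\<^sub>R hs k))^2 \<le> (\<Sum>k. (c k)^2)" for n
  proof -
    have "(norm (\<Sum>k<n. c k *\<^sub>R hs k))^2 \<le> (\<Sum>k<n. (c k)^2)" by (rule orth_sum_le) simp
    also have "\<dots> \<le> (\<Sum>k. (c k)^2)" by (rule sum_le_suminf[OF assms]) auto
    finally show ?thesis .
  qed
  ultimately show ?thesis by (intro LIMSEQ_le_const2) auto
qed

lemma bessel_finite: "(\<Sum>k<n. (inner x (hs k))^2) \<le> (norm x)^2"
proof -
  define y where "y = (\<Sum>k<n. inner x (hs k) *\<^sub>R hs k)"
  define S where "S = (\<Sum>k<n. (inner x (hs k))^2)"
  have xy: "inner x y = S" by (simp add: y_def S_def inner_sum_right power2_eq_square)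
  have yy: "(norm y)^2 \<le> S" unfolding y_def S_def by (rule orth_sum_le) simp
  have "0 \<le> (norm (x - y))^2" by simp
  also have "\<dots> = (norm x)^2 - 2 * inner x y + (norm y)^2"
    by (simp add: power2_norm_eq_inner inner_diff_left inner_diff_right inner_commute)
  finally show ?thesis using xy yy by (simp add: S_def)
qed

lemma bessel_summable: "summable (\<lambda>k. (inner x (hs k))^2)"
  by (rule summableI_nonneg_bounded[where x="(norm x)^2"]) (auto intro: bessel_finite)

lemma bessel: "(\<Sum>k. (inner x (hs k))^2) \<le> (norm x)^2"
  by (rule suminf_le_const[OF bessel_summable]) (rule bessel_finite)

context
  fixes beta :: "nat \<Rightarrow> real"
  assumes b01: "\<forall>k. 0 \<le> beta k \<and> beta k \<le> 1"
begin

lemma coef_le: "(beta k * inner x (hs k))^2 \<le> (inner x (hs k))^2"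
proof -
  have "(beta k)^2 \<le> 1" using b01 by (simp add: power_le_one)
  then show ?thesis by (simp add: power_mult_distrib mult_left_le_one_le)
qed

lemma coef_summable: "summable (\<lambda>k. (beta k * inner x (hs k))^2)"
  by (rule summable_comparison_test'[OF bessel_summable[of x]]) (simp add: coef_le)

lemma Gamma_summable: "summable (\<lambda>k. (beta k * inner x (hs k)) *\<^sub>R hs k)"
  by (rule summable_orth[OF coef_summable])

lemma Gamma_norm: "norm (Gamma_beta beta hs x) \<le> norm x"
proof -
  have "(norm (Gamma_beta beta hs x))^2 \<le> (\<Sum>k. (beta k * inner x (hs k))^2)"
    unfolding Gamma_beta_def by (rule norm_suminf_orth[OF coef_summable])
  also have "\<dots> \<le> (\<Sum>k. (inner x (hs k))^2)"
    by (rule suminf_le[OF _ coef_summable bessel_summable]) (rule coef_le)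
  also have "\<dots> \<le> (norm x)^2" by (rule bessel)
  finally show ?thesis by (simp add: power_mono_iff[symmetric] abs_le_square_iff)
qed

lemma Gamma_add: "Gamma_beta beta hs (x + y) = Gamma_beta beta hs x + Gamma_beta beta hs y"
  unfolding Gamma_beta_def
  by (subst suminf_add[OF Gamma_summable Gamma_summable]) (simp add: inner_add_left algebra_simps)

lemma Gamma_scale: "Gamma_beta beta hs (a *\<^sub>R x) = a *\<^sub>R Gamma_beta beta hs x"
proof -
  have "(\<lambda>k. (beta k * inner (a *\<^sub>R x) (hs k)) *\<^sub>R hs k) = (\<lambda>k. a *\<^sub>R ((beta k * inner x (hs k)) *\<^sub>R hs k))"
    by (rule ext) (simp add: algebra_simps)
  then show ?thesis unfolding Gamma_beta_def using suminf_scaleR_right[OF Gamma_summable[of x]] by simp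
qed

lemma Gamma_bounded_linear: "bounded_linear (Gamma_beta beta hs)"
  by (rule bounded_linear_intro[where K=1]) (auto simp: Gamma_add Gamma_scale Gamma_norm)

lemma Gamma_inner: "inner (Gamma_beta beta hs x) y = (\<Sum>k. beta k * inner x (hs k) * inner (hs k) y)"
  unfolding Gamma_beta_def
  by (subst bounded_linear.suminf[OF bounded_linear_inner_left Gamma_summable]) simp

lemma Gamma_inner_sums: "(\<lambda>k. beta k * inner x (hs k) * inner (hs k) y) sums inner (Gamma_beta beta hs x) y"
  unfolding Gamma_beta_def
  using bounded_linear.sums[OF bounded_linear_inner_left summable_sums[OF Gamma_summable]] by simp

end
end


lemma borel_measurable_suminf_complete:
  fixes f :: "nat \<Rightarrow> 'a \<Rightarrow> 'b::{real_normed_vector, complete_space, second_countable_topology}"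
  assumes f[measurable]: "\<And>i. f i \<in> borel_measurable M"
  shows "(\<lambda>x. suminf (\<lambda>i. f i x)) \<in> borel_measurable M"
proof -
  define g where "g = (\<lambda>n x. \<Sum>i<n. f i x)"
  have g[measurable]: "\<And>n. g n \<in> borel_measurable M" unfolding g_def by measurable
  define u' where "u' = (\<lambda>x. lim (\<lambda>i. if Cauchy (\<lambda>i. g i x) then g i x else 0))"
  have *: "\<And>x. suminf (\<lambda>i. f i x) = (if Cauchy (\<lambda>i. g i x) then u' x else (THE x. False))"
    by (auto simp: suminf_def sums_def g_def u'_def lim_def convergent_eq_Cauchy[symmetric])
  have "u' \<in> borel_measurable M"
  proof (rule borel_measurable_LIMSEQ_metric)
    fix x
    have "convergent (\<lambda>i. if Cauchy (\<lambda>i. g i x) then g i x else 0)"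
      by (cases "Cauchy (\<lambda>i. g i x)")
         (auto simp add: convergent_eq_Cauchy[symmetric] convergent_def)
    then show "(\<lambda>i. if Cauchy (\<lambda>i. g i x) then g i x else 0) \<longlonglongrightarrow> u' x"
      unfolding u'_def by (rule convergent_LIMSEQ_iff[THEN iffD1])
  qed measurable
  then show ?thesis
    unfolding * by measurable
qed

lemma lin_span_L2: assumes "S \<subseteq> L2 M" "t \<in> lin_span S" shows "t \<in> L2 M"
proof -
  obtain F c where F: "finite F" "F \<subseteq> S" "t = (\<lambda>z. \<Sum>f\<in>F. c f * f z)"
    using assms(2) by (auto simp: lin_span_def)
  have "(\<lambda>z. \<Sum>f\<in>F. c f * f z) \<in> L2 M"
    using F assms(1) by (intro L2_sum L2_scale) auto
  then show ?thesis using F by simp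
qed

lemma lin_span_zero: "(\<lambda>z. 0) \<in> lin_span S"
  unfolding lin_span_def by (rule CollectI, rule exI[of _ "{}"]) auto

lemma lin_span_add: assumes "t1 \<in> lin_span S" "t2 \<in> lin_span S" shows "(\<lambda>z. t1 z + t2 z) \<in> lin_span S"
proof -
  obtain F1 c1 where F1: "finite F1" "F1 \<subseteq> S" "t1 = (\<lambda>z. \<Sum>f\<in>F1. c1 f * f z)"
    using assms(1) by (auto simp: lin_span_def)
  obtain F2 c2 where F2: "finite F2" "F2 \<subseteq> S" "t2 = (\<lambda>z. \<Sum>f\<in>F2. c2 f * f z)"
    using assms(2) by (auto simp: lin_span_def)
  define c where "c f = (if f \<in> F1 then c1 f else 0) + (if f \<in> F2 then c2 f else 0)" for f
  have fin: "finite (F1 \<union> F2)" using F1 F2 by simp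
  have "(\<Sum>f\<in>F1 \<union> F2. c f * f z) = (\<Sum>f\<in>F1. c1 f * f z) + (\<Sum>f\<in>F2. c2 f * f z)" for z
  proof -
    have "(\<Sum>f\<in>F1 \<union> F2. c f * f z) = (\<Sum>f\<in>F1 \<union> F2. (if f \<in> F1 then c1 f * f z else 0)) + (\<Sum>f\<in>F1 \<union> F2. (if f \<in> F2 then c2 f * f z else 0))"
    proof -
      have "c f * f z = (if f \<in> F1 then c1 f * f z else 0) + (if f \<in> F2 then c2 f * f z else 0)" for f
        by (simp add: c_def distrib_right)
      then show ?thesis by (simp add: sum.distrib)
    qed
    also have "(\<Sum>f\<in>F1 \<union> F2. (if f \<in> F1 then c1 f * f z else 0)) = (\<Sum>f\<in>F1. c1 f * f z)"
      using sum.inter_restrict[OF fin, of "\<lambda>f. c1 f * f z" F1, symmetric] by (simp add: Int_absorb1)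
    also have "(\<Sum>f\<in>F1 \<union> F2. (if f \<in> F2 then c2 f * f z else 0)) = (\<Sum>f\<in>F2. c2 f * f z)"
      using sum.inter_restrict[OF fin, of "\<lambda>f. c2 f * f z" F2, symmetric] by (simp add: Int_absorb1)
    finally show ?thesis .
  qed
  then show ?thesis unfolding lin_span_def using F1 F2 fin
    by (intro CollectI exI[of _ "F1 \<union> F2"] exI[of _ c]) auto
qed

lemma lin_span_scale: assumes "t \<in> lin_span S" shows "(\<lambda>z. a * t z) \<in> lin_span S"
proof -
  obtain F c where F: "finite F" "F \<subseteq> S" "t = (\<lambda>z. \<Sum>f\<in>F. c f * f z)"
    using assms by (auto simp: lin_span_def)
  show ?thesis unfolding lin_span_def using F
    by (intro CollectI exI[of _ F] exI[of _ "\<lambda>f. a * c f"]) (auto simp: sum_distrib_left mult.assoc)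
qed

context
  fixes lam :: "'z measure" and model :: "'z measure set" and P :: "'z measure"
begin

abbreviation "TS \<equiv> tangent_space lam model P"
abbreviation "TT \<equiv> tangent_set lam model P"

lemma TS_iff: "s \<in> TS \<longleftrightarrow> s \<in> L2 P \<and> (\<forall>e>0. \<exists>t\<in>lin_span TT. N2 P (\<lambda>z. s z - t z) < e)"
  by (simp add: tangent_space_def N2_def)

lemma TT_L2: "TT \<subseteq> L2 P" by (auto simp: tangent_set_def)

lemma TS_L2: "s \<in> TS \<Longrightarrow> s \<in> L2 P" by (simp add: TS_iff)

lemma LS_L2: "t \<in> lin_span TT \<Longrightarrow> t \<in> L2 P" by (rule lin_span_L2[OF TT_L2])

lemma TS_zero: "(\<lambda>z. 0) \<in> TS"
  unfolding TS_iff using lin_span_zero[of TT] by (auto simp: L2_zero N2_def intro!: bexI[of _ "\<lambda>z. 0"])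

lemma TS_add: assumes "s \<in> TS" "t \<in> TS" shows "(\<lambda>z. s z + t z) \<in> TS"
  unfolding TS_iff
proof (intro conjI allI impI)
  show "(\<lambda>z. s z + t z) \<in> L2 P" using assms by (intro L2_add TS_L2)
  fix e :: real assume e: "e > 0"
  obtain t1 where t1: "t1 \<in> lin_span TT" "N2 P (\<lambda>z. s z - t1 z) < e/4" using assms(1) e unfolding TS_iff by (meson zero_less_divide_iff zero_less_numeral)
  obtain t2 where t2: "t2 \<in> lin_span TT" "N2 P (\<lambda>z. t z - t2 z) < e/4" using assms(2) e unfolding TS_iff by (meson zero_less_divide_iff zero_less_numeral)
  have L1: "(\<lambda>z. s z - t1 z) \<in> L2 P" by (rule L2_diff[OF TS_L2[OF assms(1)] LS_L2[OF t1(1)]])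
  have L2': "(\<lambda>z. t z - t2 z) \<in> L2 P" by (rule L2_diff[OF TS_L2[OF assms(2)] LS_L2[OF t2(1)]])
  have "N2 P (\<lambda>z. s z + t z - (t1 z + t2 z)) = N2 P (\<lambda>z. (s z - t1 z) + (t z - t2 z))"
    by (simp add: algebra_simps)
  also have "\<dots> \<le> 2 * N2 P (\<lambda>z. s z - t1 z) + 2 * N2 P (\<lambda>z. t z - t2 z)" by (rule N2_add_le[OF L1 L2'])
  also have "\<dots> < e" using t1 t2 by simp
  finally show "\<exists>u\<in>lin_span TT. N2 P (\<lambda>z. s z + t z - u z) < e"
    using lin_span_add[OF t1(1) t2(1)] by (intro bexI[of _ "\<lambda>z. t1 z + t2 z"]) auto
qed

lemma TS_scale: assumes "s \<in> TS" shows "(\<lambda>z. a * s z) \<in> TS"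
  unfolding TS_iff
proof (intro conjI allI impI)
  show "(\<lambda>z. a * s z) \<in> L2 P" using assms by (intro L2_scale TS_L2)
  fix e :: real assume e: "e > 0"
  have "e / (a^2 + 1) > 0" using e by (simp add: add_nonneg_pos)
  then obtain t1 where t1: "t1 \<in> lin_span TT" "N2 P (\<lambda>z. s z - t1 z) < e / (a^2 + 1)"
    using assms unfolding TS_iff by blast
  have "N2 P (\<lambda>z. a * s z - a * t1 z) = a^2 * N2 P (\<lambda>z. s z - t1 z)"
    using N2_scale[of P a "\<lambda>z. s z - t1 z"] by (simp add: algebra_simps)
  also have "\<dots> \<le> (a^2 + 1) * N2 P (\<lambda>z. s z - t1 z)" using N2_nonneg[of P] by (simp add: algebra_simps)
  also have "\<dots> < e"
  proof -
    have pc: "0 < a^2 + 1" by (simp add: add_nonneg_pos)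
    have "N2 P (\<lambda>z. s z - t1 z) * (a^2 + 1) < e" using t1(2) pos_less_divide_eq[OF pc] by blast
    then show ?thesis by (simp add: mult.commute)
  qed
  finally show "\<exists>u\<in>lin_span TT. N2 P (\<lambda>z. a * s z - u z) < e"
    using lin_span_scale[OF t1(1), of a] by (intro bexI[of _ "\<lambda>z. a * t1 z"]) auto
qed

lemma TS_closed: assumes sL2: "s \<in> L2 P" and u: "\<And>n. u n \<in> TS" and lim: "(\<lambda>n. N2 P (\<lambda>z. u n z - s z)) \<longlonglongrightarrow> 0"
  shows "s \<in> TS"
  unfolding TS_iff
proof (intro conjI allI impI sL2)
  fix e :: real assume e: "e > 0"
  then have "e/4 > 0" by simp
  from lim[THEN order_tendstoD(2), OF this] obtain n where n: "N2 P (\<lambda>z. u n z - s z) < e/4"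
    by (auto dest: eventually_happens)
  obtain t where t: "t \<in> lin_span TT" "N2 P (\<lambda>z. u n z - t z) < e/4"
    using u[of n] \<open>e/4 > 0\<close> unfolding TS_iff by blast
  have L1: "(\<lambda>z. s z - u n z) \<in> L2 P" by (rule L2_diff[OF sL2 TS_L2[OF u]])
  have L2': "(\<lambda>z. u n z - t z) \<in> L2 P" by (rule L2_diff[OF TS_L2[OF u] LS_L2[OF t(1)]])
  have "N2 P (\<lambda>z. s z - t z) = N2 P (\<lambda>z. (s z - u n z) + (u n z - t z))" by simp
  also have "\<dots> \<le> 2 * N2 P (\<lambda>z. s z - u n z) + 2 * N2 P (\<lambda>z. u n z - t z)" by (rule N2_add_le[OF L1 L2'])
  also have "\<dots> < e" using n t N2_diff_sym[of P s "u n"] by simp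
  finally show "\<exists>t\<in>lin_span TT. N2 P (\<lambda>z. s z - t z) < e" using t by blast
qed

lemma eff_spec:
  fixes D :: "('z \<Rightarrow> real) \<Rightarrow> 'h::real_inner"
  assumes P: "prob_space P" and cl: "cont_linear_on P TS D"
  shows "eff_infl_op lam model P D h \<in> TS \<and>
    (\<forall>s\<in>TS. inner (D s) h = (\<integral>z. s z * eff_infl_op lam model P D h z \<partial>P))"
proof -
  obtain C where C: "\<And>s. s \<in> TS \<Longrightarrow> norm (D s) \<le> C * sqrt (N2 P s)"
    using cl unfolding cont_linear_on_def N2_def by blast
  have add: "\<And>s t. s \<in> TS \<Longrightarrow> t \<in> TS \<Longrightarrow> D (\<lambda>z. s z + t z) = D s + D t"
    and scale: "\<And>s a. s \<in> TS \<Longrightarrow> D (\<lambda>z. a * s z) = a *\<^sub>R D s"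
    using cl unfolding cont_linear_on_def by auto
  have "\<exists>f\<in>TS. \<forall>s\<in>TS. inner (D s) h = (\<integral>z. s z * f z \<partial>P)"
  proof (rule Riesz[OF P TS_L2 TS_zero TS_add TS_scale TS_closed])
    show "inner (D (\<lambda>z. s z + t z)) h = inner (D s) h + inner (D t) h" if "s \<in> TS" "t \<in> TS" for s t
      using add[OF that] by (simp add: inner_add_left)
    show "inner (D (\<lambda>z. a * s z)) h = a * inner (D s) h" if "s \<in> TS" for s a
      using scale[OF that] by simp
    show "\<bar>inner (D s) h\<bar> \<le> (max C 0 * norm h) * sqrt (N2 P s)" if "s \<in> TS" for s
    proof -
      have "\<bar>inner (D s) h\<bar> \<le> norm (D s) * norm h" by (rule Cauchy_Schwarz_ineq2)
      also have "\<dots> \<le> (C * sqrt (N2 P s)) * norm h" by (intro mult_right_mono C that) simp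
      also have "\<dots> \<le> (max C 0 * sqrt (N2 P s)) * norm h"
        by (intro mult_right_mono) (auto simp: N2_nonneg)
      finally show ?thesis by (simp add: mult_ac)
    qed
    show "0 \<le> max C 0 * norm h" by simp
  qed assumption+
  then show ?thesis unfolding eff_infl_op_def by (rule someI2_bex) auto
qed

end



lemma Minkowski_sum:
  assumes "finite K" "\<And>k. k \<in> K \<Longrightarrow> g k \<in> L2 M"
  shows "sqrt (N2 M (\<lambda>z. \<Sum>k\<in>K. a k * g k z)) \<le> (\<Sum>k\<in>K. \<bar>a k\<bar> * sqrt (N2 M (g k)))"
  using assms
proof (induction K rule: finite_induct)
  case empty
  then show ?case by (simp add: N2_def)
next
  case (insert x F)
  have gx: "(\<lambda>z. a x * g x z) \<in> L2 M" using insert by (intro L2_scale) auto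
  have gF: "(\<lambda>z. \<Sum>k\<in>F. a k * g k z) \<in> L2 M" using insert by (intro L2_sum L2_scale) auto
  have "sqrt (N2 M (\<lambda>z. \<Sum>k\<in>insert x F. a k * g k z)) = sqrt (N2 M (\<lambda>z. a x * g x z + (\<Sum>k\<in>F. a k * g k z)))"
    using insert by simp
  also have "\<dots> \<le> sqrt (N2 M (\<lambda>z. a x * g x z)) + sqrt (N2 M (\<lambda>z. \<Sum>k\<in>F. a k * g k z))"
    by (rule Minkowski[OF gx gF])
  also have "sqrt (N2 M (\<lambda>z. a x * g x z)) = \<bar>a x\<bar> * sqrt (N2 M (g x))"
    by (simp add: N2_scale real_sqrt_mult)
  also have "sqrt (N2 M (\<lambda>z. \<Sum>k\<in>F. a k * g k z)) \<le> (\<Sum>k\<in>F. \<bar>a k\<bar> * sqrt (N2 M (g k)))"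
    using insert by auto
  finally show ?case using insert by simp
qed

lemma Gamma_diff:
  fixes hs :: "nat \<Rightarrow> 'h::{real_inner, complete_space}"
  assumes "onb_padded hs" "\<forall>k. 0 \<le> beta k \<and> beta k \<le> 1"
  shows "Gamma_beta beta hs (x - y) = Gamma_beta beta hs x - Gamma_beta beta hs y"
  using Gamma_add[OF assms, of "x - y" y] by simp

lemma Gamma_lin3:
  fixes hs :: "nat \<Rightarrow> 'h::{real_inner, complete_space}"
  assumes "onb_padded hs" "\<forall>k. 0 \<le> beta k \<and> beta k \<le> 1"
  shows "Gamma_beta beta hs (x - y - c *\<^sub>R w) = Gamma_beta beta hs x - Gamma_beta beta hs y - c *\<^sub>R Gamma_beta beta hs w"
  by (simp add: Gamma_diff[OF assms] Gamma_scale[OF assms])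

theorem lemma7:
  fixes lam :: "'z::polish_space measure"
    and model :: "'z measure set"
    and hs :: "nat \<Rightarrow> 'h::{real_inner, complete_space, second_countable_topology}"
    and beta :: "nat \<Rightarrow> real"
    and nu :: "'z measure \<Rightarrow> 'h"
    and D :: "('z \<Rightarrow> real) \<Rightarrow> 'h"
    and P :: "'z measure"
  assumes "sigma_finite_measure lam"
    and "sets lam = sets borel"
    and "dominated_model lam model"
    and "onb_padded hs"
    and "summable (\<lambda>k. (beta k)^2)"
    and "\<forall>k. 0 \<le> beta k \<and> beta k \<le> 1"
    and "P \<in> model"
    and "pathwise_diff lam model nu P D"
  shows "pathwise_diff lam model (Gamma_beta beta hs \<circ> nu) P (Gamma_beta beta hs \<circ> D)
    \<and> is_eif lam model P (Gamma_beta beta hs \<circ> D) (phi_beta lam model P D beta hs)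
    \<and> phi_beta lam model P D beta hs \<in> L2H P"
proof -
  note onb = assms(4) and bsum = assms(5) and b01 = assms(6)
  have P: "prob_space P" using assms(3,7) by (auto simp: dominated_model_def)
  define G where "G = Gamma_beta beta hs"
  have cl: "cont_linear_on P (TS lam model P) D" and
    der: "\<And>s Pe e. s \<in> TT lam model P \<Longrightarrow> Pe \<in> submodels lam model P s \<Longrightarrow> e > 0 \<Longrightarrow>
      eventually (\<lambda>\<epsilon>. norm (nu (Pe \<epsilon>) - nu P - \<epsilon> *\<^sub>R D s) \<le> e * \<epsilon>) (at_right 0)"
    using assms(8) unfolding pathwise_diff_def by auto
  obtain C where C: "\<And>s. s \<in> TS lam model P \<Longrightarrow> norm (D s) \<le> C * sqrt (N2 P s)"
    using cl unfolding cont_linear_on_def N2_def by blast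
  have Dadd: "\<And>s t. s \<in> TS lam model P \<Longrightarrow> t \<in> TS lam model P \<Longrightarrow> D (\<lambda>z. s z + t z) = D s + D t"
    and Dscale: "\<And>s a. s \<in> TS lam model P \<Longrightarrow> D (\<lambda>z. a * s z) = a *\<^sub>R D s"
    using cl unfolding cont_linear_on_def by auto
  define C0 where "C0 = max C 0"
  have C0: "C0 \<ge> 0" by (simp add: C0_def)
  have Cb: "norm (D s) \<le> C0 * sqrt (N2 P s)" if "s \<in> TS lam model P" for s
  proof -
    have "norm (D s) \<le> C * sqrt (N2 P s)" by (rule C[OF that])
    also have "\<dots> \<le> C0 * sqrt (N2 P s)" unfolding C0_def by (intro mult_right_mono) (auto simp: N2_nonneg)
    finally show ?thesis .
  qed
  have Gnorm: "\<And>x. norm (G x) \<le> norm x" unfolding G_def by (rule Gamma_norm[OF onb b01])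
  have cl2: "cont_linear_on P (TS lam model P) (G \<circ> D)"
    unfolding cont_linear_on_def
  proof (intro conjI ballI allI)
    fix s t assume "s \<in> TS lam model P" "t \<in> TS lam model P"
    then show "(G \<circ> D) (\<lambda>z. s z + t z) = (G \<circ> D) s + (G \<circ> D) t"
      by (simp add: Dadd G_def Gamma_add[OF onb b01])
  next
    fix a s assume "s \<in> TS lam model P"
    then show "(G \<circ> D) (\<lambda>z. a * s z) = a *\<^sub>R (G \<circ> D) s"
      by (simp add: Dscale G_def Gamma_scale[OF onb b01])
  next
    show "\<exists>C. \<forall>s\<in>TS lam model P. norm ((G \<circ> D) s) \<le> C * sqrt (\<integral>z. (s z)\<^sup>2 \<partial>P)"
    proof (intro exI ballI)
      fix s assume "s \<in> TS lam model P"
      then show "norm ((G \<circ> D) s) \<le> C0 * sqrt (\<integral>z. (s z)\<^sup>2 \<partial>P)"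
        using Gnorm[of "D s"] Cb[of s] by (simp add: N2_def)
    qed
  qed
  have pd: "pathwise_diff lam model (G \<circ> nu) P (G \<circ> D)"
    unfolding pathwise_diff_def
  proof (intro conjI cl2 ballI allI impI)
    fix s Pe and e :: real assume s: "s \<in> TT lam model P" and Pe: "Pe \<in> submodels lam model P s" and e: "e > 0"
    show "\<forall>\<^sub>F \<epsilon> in at_right 0. norm ((G \<circ> nu) (Pe \<epsilon>) - (G \<circ> nu) P - \<epsilon> *\<^sub>R (G \<circ> D) s) \<le> e * \<epsilon>"
      using der[OF s Pe e]
    proof eventually_elim
      case (elim \<epsilon>)
      have "(G \<circ> nu) (Pe \<epsilon>) - (G \<circ> nu) P - \<epsilon> *\<^sub>R (G \<circ> D) s = G (nu (Pe \<epsilon>) - nu P - \<epsilon> *\<^sub>R D s)"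
        unfolding G_def by (simp add: Gamma_lin3[OF onb b01])
      then show ?case using Gnorm[of "nu (Pe \<epsilon>) - nu P - \<epsilon> *\<^sub>R D s"] elim by simp
    qed
  qed
  define f where "f k = eff_infl_op lam model P D (hs k)" for k
  have fspec: "f k \<in> TS lam model P \<and> (\<forall>s\<in>TS lam model P. inner (D s) (hs k) = (\<integral>z. s z * f k z \<partial>P))" for k
    unfolding f_def by (rule eff_spec[OF P cl])
  have fTS: "\<And>k. f k \<in> TS lam model P" using fspec by blast
  have fL2: "\<And>k. f k \<in> L2 P" using fTS by (rule TS_L2)
  have fm[measurable]: "\<And>k. f k \<in> borel_measurable P" using fL2 by (auto simp: L2_def)
  have Nf: "N2 P (f k) \<le> C0^2" for k
  proof -
    have "N2 P (f k) = (\<integral>z. f k z * f k z \<partial>P)" by (simp add: N2_def power2_eq_square)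
    also have "\<dots> = inner (D (f k)) (hs k)" using fspec[of k] fTS[of k] by simp
    also have "\<dots> \<le> norm (D (f k)) * norm (hs k)" by (rule norm_cauchy_schwarz)
    also have "\<dots> \<le> norm (D (f k)) * 1" using hs_norm[OF onb, of k] by (intro mult_left_mono) auto
    also have "\<dots> \<le> C0 * sqrt (N2 P (f k))" using Cb[OF fTS[of k]] by simp
    finally have h: "sqrt (N2 P (f k)) * sqrt (N2 P (f k)) \<le> C0 * sqrt (N2 P (f k))"
      using N2_nonneg[of P "f k"] by simp
    have "sqrt (N2 P (f k)) \<le> C0"
    proof (cases "sqrt (N2 P (f k)) = 0")
      case True then show ?thesis using C0 by simp
    next
      case False
      then have "sqrt (N2 P (f k)) > 0" using N2_nonneg[of P "f k"] by simp
      then show ?thesis by (rule mult_right_le_imp_le[OF h])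
    qed
    then have "(sqrt (N2 P (f k)))^2 \<le> C0^2" by (intro power_mono) (auto simp: N2_nonneg)
    then show ?thesis using N2_nonneg[of P "f k"] by simp
  qed
  have phi_eq: "phi_beta lam model P D beta hs = (\<lambda>z. \<Sum>k. (beta k * f k z) *\<^sub>R hs k)"
    by (simp add: phi_beta_def f_def fun_eq_iff)
  define phi where "phi = (\<lambda>z. \<Sum>k. (beta k * f k z) *\<^sub>R hs k)"
  have phim[measurable]: "phi \<in> borel_measurable P"
    unfolding phi_def by (rule borel_measurable_suminf_complete) measurable
  have intk: "integrable P (\<lambda>z. (beta k * f k z)^2)" for k
    using fL2[of k] by (auto simp: L2_def power_mult_distrib)
  have "(\<integral>\<^sup>+z. (\<Sum>k. ennreal ((beta k * f k z)^2)) \<partial>P) = (\<Sum>k. \<integral>\<^sup>+z. ennreal ((beta k * f k z)^2) \<partial>P)"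
    by (rule nn_integral_suminf) measurable
  also have "\<dots> = (\<Sum>k. ennreal ((beta k)^2 * N2 P (f k)))"
  proof (rule suminf_cong)
    fix k
    have "(\<integral>\<^sup>+z. ennreal ((beta k * f k z)^2) \<partial>P) = ennreal (\<integral>z. (beta k * f k z)^2 \<partial>P)"
      by (rule nn_integral_eq_integral[OF intk]) auto
    also have "(\<integral>z. (beta k * f k z)^2 \<partial>P) = (beta k)^2 * N2 P (f k)"
      by (simp add: N2_def power_mult_distrib)
    finally show "(\<integral>\<^sup>+z. ennreal ((beta k * f k z)^2) \<partial>P) = ennreal ((beta k)^2 * N2 P (f k))" .
  qed
  also have "\<dots> \<le> (\<Sum>k. ennreal ((beta k)^2 * C0^2))"
    by (intro suminf_le summableI ennreal_leI mult_left_mono Nf) auto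
  also have "\<dots> = ennreal ((\<Sum>k. (beta k)^2) * C0^2)"
    by (intro suminf_ennreal_eq sums_mult2 summable_sums bsum) auto
  finally have "(\<integral>\<^sup>+z. (\<Sum>k. ennreal ((beta k * f k z)^2)) \<partial>P) \<le> ennreal ((\<Sum>k. (beta k)^2) * C0^2)" .
  then have sqfin: "(\<integral>\<^sup>+z. (\<Sum>k. ennreal ((beta k * f k z)^2)) \<partial>P) < top"
    using ennreal_less_top by (rule le_less_trans)
  have "AE z in P. (\<Sum>k. ennreal ((beta k * f k z)^2)) \<noteq> \<infinity>"
    by (rule nn_integral_PInf_AE) (use sqfin in auto)
  then have AEs: "AE z in P. summable (\<lambda>k. (beta k * f k z)^2)"
    by eventually_elim (rule summable_suminf_not_top, auto)
  have phiL2H: "phi \<in> L2H P"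
    unfolding L2H_def
  proof (intro CollectI conjI phim)
    have "(\<integral>\<^sup>+z. ennreal ((norm (phi z))^2) \<partial>P) \<le> (\<integral>\<^sup>+z. (\<Sum>k. ennreal ((beta k * f k z)^2)) \<partial>P)"
    proof (rule nn_integral_mono_AE)
      show "AE z in P. ennreal ((norm (phi z))^2) \<le> (\<Sum>k. ennreal ((beta k * f k z)^2))"
        using AEs
      proof eventually_elim
        case (elim z)
        have "(norm (phi z))^2 \<le> (\<Sum>k. (beta k * f k z)^2)"
          unfolding phi_def by (rule norm_suminf_orth[OF onb elim])
        moreover have "(\<Sum>k. ennreal ((beta k * f k z)^2)) = ennreal (\<Sum>k. (beta k * f k z)^2)"
          by (rule suminf_ennreal2) (auto simp: elim)
        ultimately show ?case by (simp add: ennreal_leI)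
      qed
    qed
    then have lt: "(\<integral>\<^sup>+z. ennreal ((norm (phi z))^2) \<partial>P) < top" using sqfin by (rule le_less_trans)
    show "integrable P (\<lambda>z. (norm (phi z))^2)"
    proof (rule integrableI_nonneg)
      show "(\<lambda>z. (norm (phi z))^2) \<in> borel_measurable P" by measurable
      show "AE z in P. 0 \<le> (norm (phi z))^2" by simp
      show "(\<integral>\<^sup>+z. ennreal ((norm (phi z))^2) \<partial>P) < \<infinity>" using lt by simp
    qed
  qed
  have eif: "is_eif lam model P (G \<circ> D) phi"
    unfolding is_eif_def
  proof
    fix h :: 'h
    define g where "g = eff_infl_op lam model P (G \<circ> D) h"
    have gspec: "g \<in> TS lam model P" "\<And>s. s \<in> TS lam model P \<Longrightarrow> inner (G (D s)) h = (\<integral>z. s z * g z \<partial>P)"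
      using eff_spec[OF P cl2, of h] unfolding g_def by auto
    define a where "a k = beta k * inner h (hs k)" for k
    have asum: "summable (\<lambda>k. \<bar>a k\<bar>)"
    proof (rule summable_comparison_test'[where g="\<lambda>k. ((beta k)^2 + (inner h (hs k))^2) / 2"])
      show "summable (\<lambda>k. ((beta k)^2 + (inner h (hs k))^2) / 2)"
        by (intro summable_divide summable_add bsum bessel_summable[OF onb])
      show "norm \<bar>a k\<bar> \<le> ((beta k)^2 + (inner h (hs k))^2) / 2" for k
        using abs_mult_le_sq[of "beta k" "inner h (hs k)"] by (simp add: a_def)
    qed
    define psi where "psi n = (\<lambda>z. \<Sum>k<n. a k * f k z)" for n
    have psiTS: "psi n \<in> TS lam model P" for n
    proof (induction n)
      case 0 then show ?case by (simp add: psi_def TS_zero)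
    next
      case (Suc n)
      have "(\<lambda>z. psi n z + a n * f n z) \<in> TS lam model P" by (rule TS_add[OF Suc TS_scale[OF fTS]])
      then show ?case by (simp add: psi_def)
    qed
    have psiL2: "\<And>n. psi n \<in> L2 P" using psiTS by (rule TS_L2)
    have psidiff: "N2 P (\<lambda>z. psi i z - psi j z) < e"
      if "j \<le> i" "\<forall>m\<ge>N. \<forall>n. norm (\<Sum>k\<in>{m..<n}. \<bar>a k\<bar>) < sqrt e / (C0 + 1)" "j \<ge> N" "e > 0" for i j N e
    proof -
      have eq: "(\<lambda>z. psi i z - psi j z) = (\<lambda>z. \<Sum>k\<in>{j..<i}. a k * f k z)"
      proof
        fix z
        show "psi i z - psi j z = (\<Sum>k\<in>{j..<i}. a k * f k z)"
          using sum_diff_nat_ivl[of 0 j i "\<lambda>k. a k * f k z"] that(1) by (simp add: psi_def lessThan_atLeast0)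
      qed
      have "sqrt (N2 P (\<lambda>z. psi i z - psi j z)) \<le> (\<Sum>k\<in>{j..<i}. \<bar>a k\<bar> * sqrt (N2 P (f k)))"
        unfolding eq by (rule Minkowski_sum) (auto simp: fL2)
      also have "\<dots> \<le> (\<Sum>k\<in>{j..<i}. \<bar>a k\<bar> * C0)"
      proof (intro sum_mono mult_left_mono)
        fix k
        have "sqrt (N2 P (f k)) \<le> sqrt (C0^2)" using Nf[of k] by (rule real_sqrt_le_mono)
        then show "sqrt (N2 P (f k)) \<le> C0" using C0 by simp
      qed simp
      also have "\<dots> = C0 * (\<Sum>k\<in>{j..<i}. \<bar>a k\<bar>)" by (simp add: sum_distrib_left mult_ac)
      also have "\<dots> \<le> C0 * (sqrt e / (C0 + 1))"
        using that(2,3) C0 by (intro mult_left_mono) (auto intro: less_imp_le)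
      also have "\<dots> < sqrt e"
        using C0 \<open>e > 0\<close> by (simp add: field_simps)
      finally show ?thesis by simp
    qed
    have cauchy: "\<exists>K. \<forall>i\<ge>K. \<forall>j\<ge>K. N2 P (\<lambda>z. psi i z - psi j z) < e" if e: "e > 0" for e
    proof -
      have "sqrt e / (C0 + 1) > 0" using e C0 by simp
      then obtain N where N: "\<forall>m\<ge>N. \<forall>n. norm (\<Sum>k\<in>{m..<n}. \<bar>a k\<bar>) < sqrt e / (C0 + 1)"
        using asum unfolding summable_Cauchy by blast
      show ?thesis
      proof (intro exI allI impI)
        fix i j assume ij: "i \<ge> N" "j \<ge> N"
        show "N2 P (\<lambda>z. psi i z - psi j z) < e"
        proof (cases "j \<le> i")
          case True then show ?thesis using psidiff[OF True N ij(2) e] by simp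
        next
          case False
          then have "N2 P (\<lambda>z. psi j z - psi i z) < e" using psidiff[OF _ N ij(1) e] by simp
          then show ?thesis using N2_diff_sym[of P "psi i" "psi j"] by simp
        qed
      qed
    qed
    obtain psi' r where psi'L2: "psi' \<in> L2 P" and r: "strict_mono r"
      and AEr: "AE z in P. (\<lambda>k. psi (r k) z) \<longlonglongrightarrow> psi' z"
      and lim: "(\<lambda>n. N2 P (\<lambda>z. psi n z - psi' z)) \<longlonglongrightarrow> 0"
      using prob_space.L2_complete[OF P psiL2 cauchy] by blast
    have psi'TS: "psi' \<in> TS lam model P" by (rule TS_closed[OF psi'L2 psiTS lim])
    have AE1: "AE z in P. psi' z = inner h (phi z)"
      using AEs AEr
    proof eventually_elim
      case (elim z)
      have "(\<lambda>k. (beta k * f k z) *\<^sub>R hs k) sums phi z"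
        unfolding phi_def by (rule summable_sums[OF summable_orth[OF onb elim(1)]])
      from bounded_linear.sums[OF bounded_linear_inner_right this, of h]
      have "(\<lambda>k. a k * f k z) sums inner h (phi z)" by (simp add: a_def mult_ac)
      then have "(\<lambda>n. psi n z) \<longlonglongrightarrow> inner h (phi z)" by (simp add: sums_def psi_def)
      then have "(\<lambda>k. psi (r k) z) \<longlonglongrightarrow> inner h (phi z)"
        using LIMSEQ_subseq_LIMSEQ[OF _ r] by (simp add: o_def)
      then show ?case using elim(2) by (rule LIMSEQ_unique[symmetric])
    qed
    have intlim: "(\<integral>z. s z * psi' z \<partial>P) = inner (G (D s)) h" if sTS: "s \<in> TS lam model P" for s
    proof -
      have sL2: "s \<in> L2 P" by (rule TS_L2[OF sTS])
      have A: "(\<integral>z. s z * psi n z \<partial>P) = (\<Sum>k<n. a k * inner (D s) (hs k))" for n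
      proof -
        have "(\<integral>z. s z * psi n z \<partial>P) = (\<integral>z. (\<Sum>k<n. a k * (s z * f k z)) \<partial>P)"
          by (simp add: psi_def sum_distrib_left mult_ac)
        also have "\<dots> = (\<Sum>k<n. (\<integral>z. a k * (s z * f k z) \<partial>P))"
          by (rule Bochner_Integration.integral_sum) (use L2_mult_int[OF sL2 fL2] in auto)
        also have "\<dots> = (\<Sum>k<n. a k * inner (D s) (hs k))"
          using fspec sTS L2_mult_int[OF sL2 fL2] by (intro sum.cong) auto
        finally show ?thesis .
      qed
      have B: "(\<lambda>k. a k * inner (D s) (hs k)) sums inner (G (D s)) h"
        using Gamma_inner_sums[OF onb b01, of "D s" h] by (simp add: G_def a_def inner_commute mult_ac)
      have lim1: "(\<lambda>n. \<integral>z. s z * psi n z \<partial>P) \<longlonglongrightarrow> inner (G (D s)) h"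
        using B by (simp add: A sums_def)
      have dL2: "\<And>n. (\<lambda>z. psi n z - psi' z) \<in> L2 P" by (rule L2_diff[OF psiL2 psi'L2])
      have "(\<lambda>n. (\<integral>z. s z * psi n z \<partial>P) - (\<integral>z. s z * psi' z \<partial>P)) \<longlonglongrightarrow> 0"
      proof (rule Lim_null_comparison)
        show "\<forall>\<^sub>F n in sequentially. norm ((\<integral>z. s z * psi n z \<partial>P) - (\<integral>z. s z * psi' z \<partial>P)) \<le> sqrt (N2 P s) * sqrt (N2 P (\<lambda>z. psi n z - psi' z))"
        proof (intro always_eventually allI)
          fix n
          have "(\<integral>z. s z * psi n z \<partial>P) - (\<integral>z. s z * psi' z \<partial>P) = (\<integral>z. s z * (psi n z - psi' z) \<partial>P)"
            using L2_mult_int[OF sL2 psiL2] L2_mult_int[OF sL2 psi'L2]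
            by (simp add: right_diff_distrib)
          then show "norm ((\<integral>z. s z * psi n z \<partial>P) - (\<integral>z. s z * psi' z \<partial>P)) \<le> sqrt (N2 P s) * sqrt (N2 P (\<lambda>z. psi n z - psi' z))"
            using CS[OF sL2 dL2[of n]] by simp
        qed
        have "(\<lambda>n. sqrt (N2 P s) * sqrt (N2 P (\<lambda>z. psi n z - psi' z))) \<longlonglongrightarrow> sqrt (N2 P s) * sqrt 0"
          by (intro tendsto_intros lim)
        then show "(\<lambda>n. sqrt (N2 P s) * sqrt (N2 P (\<lambda>z. psi n z - psi' z))) \<longlonglongrightarrow> 0" by simp
      qed
      then have "(\<lambda>n. ((\<integral>z. s z * psi n z \<partial>P) - (\<integral>z. s z * psi' z \<partial>P)) + (\<integral>z. s z * psi' z \<partial>P)) \<longlonglongrightarrow> 0 + (\<integral>z. s z * psi' z \<partial>P)"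
        by (intro tendsto_add tendsto_const)
      then have lim2: "(\<lambda>n. \<integral>z. s z * psi n z \<partial>P) \<longlonglongrightarrow> (\<integral>z. s z * psi' z \<partial>P)" by simp
      show ?thesis using LIMSEQ_unique[OF lim2 lim1] .
    qed
    define u where "u = (\<lambda>z. g z - psi' z)"
    have uTS: "u \<in> TS lam model P"
      using TS_add[OF gspec(1) TS_scale[OF psi'TS, of "-1"]] by (simp add: u_def)
    have uL2: "u \<in> L2 P" by (rule TS_L2[OF uTS])
    have gL2: "g \<in> L2 P" by (rule TS_L2[OF gspec(1)])
    have "(\<integral>z. u z * g z \<partial>P) = (\<integral>z. u z * psi' z \<partial>P)"
      using gspec(2)[OF uTS] intlim[OF uTS] by simp
    then have "(\<integral>z. u z * g z \<partial>P) - (\<integral>z. u z * psi' z \<partial>P) = 0" by simp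
    then have "(\<integral>z. u z * g z - u z * psi' z \<partial>P) = 0"
      using L2_mult_int[OF uL2 gL2] L2_mult_int[OF uL2 psi'L2] by simp
    then have "N2 P u = 0" by (simp add: N2_def u_def power2_eq_square right_diff_distrib)
    then have "AE z in P. u z = 0" by (rule N2_zero_AE[OF uL2])
    then show "AE z in P. eff_infl_op lam model P (G \<circ> D) h z = inner h (phi z)"
      using AE1 by eventually_elim (simp add: u_def g_def)
  qed
  show ?thesis
    using pd eif phiL2H unfolding phi_eq G_def phi_def by simp
qed


end
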